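(* For $k'\in(0,1)$ set $k=\sqrt{1-k'^2}$ and define $$A(k')=\sqrt{k\,k'\,{}_2F_1\!\left(\tfrac12,\tfrac12;1;k^2\right){}_2F_1\!\left(\tfrac12,\tfrac12;1;k'^2\right)},\qquad B(k')=\sqrt{{}_2F_1\!\left(\tfrac12,\tfrac12;1;k^2\right){}_2F_1\!\left(\tfrac12,\tfrac12;1;k'^2\right)}.$$ Then for all $k'\in(0,1)$, $$A(k')\le A\!\left(\tfrac{1}{\sqrt2}\right)\quad\text{and}\quad B(k')\ge B\!\left(\tfrac{1}{\sqrt2}\right),$$ with equality in either inequality if and only if $k'=k=\tfrac{1}{\sqrt2}$ (which corresponds to the square torus, $\alpha=1$). Equivalently, for all $\alpha>0$, $\theta_4(e^{-\pi\alpha^2})\theta_4(e^{-\pi\alpha^{-2}})\le\theta_4(e^{-\pi})^2$ and $\theta_3(e^{-\pi\alpha^2})\theta_3(e^{-\pi\alpha^{-2}})\ge\theta_3(e^{-\pi})^2$, with equality iff $\alpha=1$.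
   Context: ${}_2F_1(a,b;c;x)=\sum_{n\ge0}\frac{(a)_n(b)_n}{(c)_n}\frac{x^n}{n!}$ with $(z)_n=\Gamma(z+n)/\Gamma(z)$. Theta-nulls for $0<q<1$: $\theta_3(q)=\sum_{k\in\mathbb{Z}} q^{k^2}$, $\theta_4(q)=\sum_{k\in\mathbb{Z}}(-1)^k q^{k^2}$. For $\alpha>0$, $k'=\theta_4(e^{-\pi\alpha^2})^2/\theta_3(e^{-\pi\alpha^2})^2$ is the complementary elliptic modulus, and $A(k'),B(k')$ equal the minimum and maximum over $(x,y)\in\mathbb{R}^2$ of $\sum_{(k,l)\in\mathbb{Z}^2}e^{-\pi(\alpha^2k^2+\alpha^{-2}l^2)}e^{2\pi i(kx+ly)}$. *)

theory Defs
  imports "HOL-Analysis.Analysis"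
begin

definition hyp2F1 :: "real \<Rightarrow> real \<Rightarrow> real \<Rightarrow> real \<Rightarrow> real" where
  "hyp2F1 a b c x = (\<Sum>n. pochhammer a n * pochhammer b n / pochhammer c n * x ^ n / fact n)"

definition theta3 :: "real \<Rightarrow> real" where
  "theta3 q = (\<Sum>\<^sub>\<infinity>k::int. q ^ nat (k * k))"

definition theta4 :: "real \<Rightarrow> real" where
  "theta4 q = (\<Sum>\<^sub>\<infinity>k::int. (-1) ^ nat \<bar>k\<bar> * q ^ nat (k * k))"

definition A_fun :: "real \<Rightarrow> real" where
  "A_fun k' = (let k = sqrt (1 - k'^2) in
     sqrt (k * k' * hyp2F1 (1/2) (1/2) 1 (k^2) * hyp2F1 (1/2) (1/2) 1 (k'^2)))"

definition B_fun :: "real \<Rightarrow> real" where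
  "B_fun k' = (let k = sqrt (1 - k'^2) in
     sqrt (hyp2F1 (1/2) (1/2) 1 (k^2) * hyp2F1 (1/2) (1/2) 1 (k'^2)))"

end

theory Submission
  imports Defs "HOL-Probability.Probability"
begin


lemma Re_iexp_mult: "Re (exp (\<i> * (complex_of_real t * complex_of_real x))) = cos (t*x)"
proof -
  have "exp (\<i> * (complex_of_real t * complex_of_real x)) = cis (t*x)"
    by (simp add: cis_conv_exp)
  thus ?thesis by simp
qed

lemma gauss_cos_lborel:
  fixes t :: real
  shows "integrable lborel (\<lambda>x. std_normal_density x * cos (t*x))"
    and "(LINT x|lborel. std_normal_density x * cos (t*x)) = exp (-(t^2)/2)"
proof -
  have int0: "integrable lborel std_normal_density"
    using integrable_std_normal_moment[of 0] by simp
  have intc: "integrable lborel (\<lambda>x. std_normal_density x *\<^sub>R iexp (t*x))"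
    by (rule Bochner_Integration.integrable_bound[OF int0]) (auto simp: norm_mult normal_density_nonneg)
  have "char std_normal_distribution t = (CLINT x|lborel. std_normal_density x *\<^sub>R iexp (t*x))"
    unfolding char_def by (subst integral_density) (auto simp: normal_density_nonneg)
  hence "complex_of_real (exp (-(t^2)/2)) = (CLINT x|lborel. std_normal_density x *\<^sub>R iexp (t*x))"
    by (simp add: char_std_normal_distribution)
  moreover have "(LINT x|lborel. Re (std_normal_density x *\<^sub>R iexp (t*x))) = Re (CLINT x|lborel. std_normal_density x *\<^sub>R iexp (t*x))"
    by (rule integral_Re[OF intc])
  ultimately have "Re (complex_of_real (exp (-(t^2)/2))) = (LINT x|lborel. Re (std_normal_density x *\<^sub>R iexp (t*x)))"
    by simp
  moreover have "\<And>x. Re (std_normal_density x *\<^sub>R iexp (t*x)) = std_normal_density x * cos (t*x)"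
    by (simp add: Re_iexp_mult)
  ultimately show "(LINT x|lborel. std_normal_density x * cos (t*x)) = exp (-(t^2)/2)" by (simp add: Re_iexp_mult)
  show "integrable lborel (\<lambda>x. std_normal_density x * cos (t*x))"
    by (rule Bochner_Integration.integrable_bound[OF int0]) (auto simp: normal_density_nonneg abs_mult intro!: mult_left_le)
qed

lemma gauss_cos_HK:
  fixes t :: real
  shows "((\<lambda>x. exp (-(x^2)/2) * cos (t*x)) has_integral (sqrt (2*pi) * exp (-(t^2)/2))) UNIV"
proof -
  have "((\<lambda>x. std_normal_density x * cos (t*x)) has_integral exp (-(t^2)/2)) UNIV"
    using has_integral_integral_lborel[OF gauss_cos_lborel(1)] gauss_cos_lborel(2) by simp
  hence "((\<lambda>x. sqrt (2*pi) * (std_normal_density x * cos (t*x))) has_integral sqrt (2*pi) * exp (-(t^2)/2)) UNIV"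
    by (rule has_integral_mult_right)
  moreover have "\<And>x. sqrt (2*pi) * (std_normal_density x * cos (t*x)) = exp (-(x^2)/2) * cos (t*x)"
    by (simp add: std_normal_density_def)
  ultimately show ?thesis by simp
qed


lemma gauss_fourier_lborel:
  fixes a m :: real
  assumes a: "a > 0"
  shows "integrable lborel (\<lambda>t. exp (-(pi*a*t^2)) * cos (2*pi*m*t))"
    and "(LINT t|lborel. exp (-(pi*a*t^2)) * cos (2*pi*m*t)) = exp (-(pi*m^2/a)) / sqrt a"
proof -
  define c where "c = sqrt (2*pi*a)"
  define \<tau> where "\<tau> = 2*pi*m/c"
  have c: "c > 0" using a by (simp add: c_def)
  have c2: "c^2 = 2*pi*a" using a by (simp add: c_def)
  let ?f = "\<lambda>x. std_normal_density x * cos (\<tau>*x)"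
  have eq: "?f (0 + c * t) = exp (-(pi*a*t^2)) * cos (2*pi*m*t) / sqrt (2*pi)" for t
  proof -
    have h1: "-((c*t)^2)/2 = -(pi*a*t^2)" by (simp add: power_mult_distrib c2)
    have h2: "\<tau>*(c*t) = 2*pi*m*t" using c by (simp add: \<tau>_def)
    have "?f (0 + c * t) = std_normal_density (c*t) * cos (2*pi*m*t)" by (simp only: h2 add_0)
    also have "\<dots> = exp (-(pi*a*t^2)) * cos (2*pi*m*t) / sqrt (2*pi)"
      unfolding std_normal_density_def h1 by simp
    finally show ?thesis .
  qed
  have int: "integrable lborel (\<lambda>t. ?f (0 + c * t))"
    using lborel_integrable_real_affine[OF gauss_cos_lborel(1), of c 0] c by simp
  hence i2: "integrable lborel (\<lambda>t. sqrt (2*pi) * ?f (0 + c*t))" by (rule integrable_mult_right)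
  have eqf: "(\<lambda>t. sqrt (2*pi) * ?f (0 + c*t)) = (\<lambda>t. exp (-(pi*a*t^2)) * cos (2*pi*m*t))"
    using eq[simplified] by (simp add: fun_eq_iff)
  show "integrable lborel (\<lambda>t. exp (-(pi*a*t^2)) * cos (2*pi*m*t))" using i2 eqf by metis
  have "exp (-(\<tau>^2)/2) = c * (LINT t|lborel. ?f (0 + c*t))"
    using lborel_integral_real_affine[of c ?f 0] c gauss_cos_lborel(2)[of \<tau>] by simp
  also have "(LINT t|lborel. ?f (0 + c*t)) = (LINT t|lborel. exp (-(pi*a*t^2)) * cos (2*pi*m*t)) / sqrt (2*pi)"
    using eq[simplified] by (simp add: fun_eq_iff)
  finally have "(LINT t|lborel. exp (-(pi*a*t^2)) * cos (2*pi*m*t)) = exp (-(\<tau>^2)/2) * sqrt (2*pi) / c"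
    using c by (simp add: field_simps)
  also have "\<dots> = exp (-(pi*m^2/a)) / sqrt a"
  proof -
    have h1: "-(\<tau>^2)/2 = -(pi*m^2/a)" using a c2 c by (simp add: \<tau>_def power_divide field_simps power2_eq_square)
    have h2: "sqrt (2*pi) / c = 1 / sqrt a" using a by (simp add: c_def real_sqrt_mult field_simps)
    have "exp (-(\<tau>^2)/2) * sqrt (2*pi) / c = exp (-(\<tau>^2)/2) * (sqrt (2*pi) / c)" by simp
    also have "\<dots> = exp (-(pi*m^2/a)) * (1 / sqrt a)" by (simp only: h1 h2)
    finally show ?thesis by simp
  qed
  finally show "(LINT t|lborel. exp (-(pi*a*t^2)) * cos (2*pi*m*t)) = exp (-(pi*m^2/a)) / sqrt a" .
qed

lemma gauss_fourier:
  fixes a m :: real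
  assumes a: "a > 0"
  shows "((\<lambda>t. exp (-(pi*a*t^2)) * cos (2*pi*m*t)) has_integral (exp (-(pi*m^2/a)) / sqrt a)) UNIV"
  using has_integral_integral_lborel[OF gauss_fourier_lborel(1)[OF a]] gauss_fourier_lborel(2)[OF a] by simp


definition trigc :: "(real \<Rightarrow> real) \<Rightarrow> bool" where
  "trigc f \<longleftrightarrow> (\<exists>n \<beta>. \<forall>\<theta>. f \<theta> = (\<Sum>j\<le>n. \<beta> j * cos (real j * \<theta>)))"

lemma trigc_pad:
  assumes "\<forall>\<theta>. f \<theta> = (\<Sum>j\<le>n. \<beta> j * cos (real j * \<theta>))" and "n \<le> m"
  shows "\<forall>\<theta>. f \<theta> = (\<Sum>j\<le>m. (if j \<le> n then \<beta> j else 0) * cos (real j * \<theta>))"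
proof
  fix \<theta>
  have "(\<Sum>j\<le>m. (if j \<le> n then \<beta> j else 0) * cos (real j * \<theta>)) = (\<Sum>j\<le>n. (if j \<le> n then \<beta> j else 0) * cos (real j * \<theta>))"
    using assms(2) by (intro sum.mono_neutral_right) auto
  also have "\<dots> = (\<Sum>j\<le>n. \<beta> j * cos (real j * \<theta>))" by (intro sum.cong) auto
  finally show "f \<theta> = (\<Sum>j\<le>m. (if j \<le> n then \<beta> j else 0) * cos (real j * \<theta>))" using assms(1) by simp
qed

lemma trigc_add:
  assumes "trigc f" "trigc g" shows "trigc (\<lambda>\<theta>. f \<theta> + g \<theta>)"
proof -
  obtain n \<beta> where f: "\<forall>\<theta>. f \<theta> = (\<Sum>j\<le>n. \<beta> j * cos (real j * \<theta>))" using assms(1) trigc_def by blast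
  obtain m \<gamma> where g: "\<forall>\<theta>. g \<theta> = (\<Sum>j\<le>m. \<gamma> j * cos (real j * \<theta>))" using assms(2) trigc_def by blast
  note f' = trigc_pad[OF f, of "max n m"] and g' = trigc_pad[OF g, of "max n m"]
  show ?thesis unfolding trigc_def
    by (rule exI[of _ "max n m"], rule exI[of _ "\<lambda>j. (if j \<le> n then \<beta> j else 0) + (if j \<le> m then \<gamma> j else 0)"])
       (use f' g' in \<open>auto simp: distrib_right sum.distrib\<close>)
qed

lemma trigc_scale:
  assumes "trigc f" shows "trigc (\<lambda>\<theta>. c * f \<theta>)"
proof -
  obtain n \<beta> where f: "\<forall>\<theta>. f \<theta> = (\<Sum>j\<le>n. \<beta> j * cos (real j * \<theta>))" using assms(1) trigc_def by blast
  show ?thesis unfolding trigc_def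
    by (rule exI[of _ n], rule exI[of _ "\<lambda>j. c * \<beta> j"]) (use f in \<open>auto simp: sum_distrib_left mult.assoc\<close>)
qed

lemma trigc_cos: "trigc (\<lambda>\<theta>. cos (real k * \<theta>))"
  unfolding trigc_def
proof (intro exI allI)
  fix \<theta>
  have "(\<Sum>j\<le>k. (if j = k then 1 else 0) * cos (real j * \<theta>)) = (\<Sum>j\<le>k. if j = k then cos (real j * \<theta>) else 0)"
    by (intro sum.cong) auto
  also have "\<dots> = cos (real k * \<theta>)" by (simp add: sum.delta)
  finally show "cos (real k * \<theta>) = (\<Sum>j\<le>k. (if j = k then 1 else 0) * cos (real j * \<theta>))" by simp
qed

lemma trigc_sum:
  assumes "\<And>i. i \<in> I \<Longrightarrow> trigc (f i)" "finite I"
  shows "trigc (\<lambda>\<theta>. \<Sum>i\<in>I. f i \<theta>)"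
  using assms(2,1)
proof (induction I rule: finite_induct)
  case empty
  then show ?case using trigc_scale[OF trigc_cos[of 0], of 0] by simp
next
  case (insert x F)
  then show ?case using trigc_add[of "f x" "\<lambda>\<theta>. \<Sum>i\<in>F. f i \<theta>"] by simp
qed

lemma trigc_cos_mult:
  assumes "trigc f" shows "trigc (\<lambda>\<theta>. cos \<theta> * f \<theta>)"
proof -
  obtain n \<beta> where f: "\<forall>\<theta>. f \<theta> = (\<Sum>j\<le>n. \<beta> j * cos (real j * \<theta>))" using assms(1) trigc_def by blast
  have one: "trigc (\<lambda>\<theta>. cos \<theta> * cos (real j * \<theta>))" for j
  proof (cases j)
    case 0
    then show ?thesis using trigc_cos[of 1] by simp
  next
    case (Suc k)
    have "cos \<theta> * cos (real j * \<theta>) = 1/2 * cos (real k * \<theta>) + 1/2 * cos (real (Suc j) * \<theta>)" for \<theta>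
      unfolding cos_times_cos using Suc by (simp add: algebra_simps)
    then show ?thesis
      using trigc_add[OF trigc_scale[OF trigc_cos[of k]] trigc_scale[OF trigc_cos[of "Suc j"]], of "1/2" "1/2"]
      by simp
  qed
  have "trigc (\<lambda>\<theta>. \<Sum>j\<le>n. \<beta> j * (cos \<theta> * cos (real j * \<theta>)))"
    by (rule trigc_sum) (auto intro: trigc_scale one)
  moreover have "(\<lambda>\<theta>. \<Sum>j\<le>n. \<beta> j * (cos \<theta> * cos (real j * \<theta>))) = (\<lambda>\<theta>. cos \<theta> * f \<theta>)"
    using f by (auto simp: sum_distrib_left mult_ac)
  ultimately show ?thesis by simp
qed

lemma trigc_cos_pow: "trigc (\<lambda>\<theta>. cos \<theta> ^ i)"
proof (induction i)
  case 0
  then show ?case using trigc_cos[of 0] by simp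
next
  case (Suc i)
  then show ?case using trigc_cos_mult[OF Suc] by simp
qed

lemma trigc_poly:
  assumes "real_polynomial_function P" shows "trigc (\<lambda>\<theta>. P (cos \<theta>))"
proof -
  obtain a n where P: "P = (\<lambda>x. \<Sum>i\<le>n. a i * x^i)" using assms real_polynomial_function_iff_sum by blast
  show ?thesis unfolding P by (rule trigc_sum) (auto intro: trigc_scale trigc_cos_pow)
qed

lemma trigc_integral:
  fixes h :: "real \<Rightarrow> real"
  assumes hc: "continuous_on {0..1} h"
    and ho: "\<And>m::nat. integral {0..1} (\<lambda>y. h y * cos (2*pi*real m*y)) = 0"
    and f: "trigc f"
  shows "integral {0..1} (\<lambda>y. h y * f (2*pi*y)) = 0"
proof -
  obtain n \<beta> where fr: "\<forall>\<theta>. f \<theta> = (\<Sum>j\<le>n. \<beta> j * cos (real j * \<theta>))" using f trigc_def by blast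
  have intj: "(\<lambda>y. h y * cos (2*pi*real j*y)) integrable_on {0..1}" for j
    by (intro integrable_continuous_interval continuous_intros hc)
  have "integral {0..1} (\<lambda>y. h y * f (2*pi*y)) = integral {0..1} (\<lambda>y. \<Sum>j\<le>n. \<beta> j * (h y * cos (2*pi*real j*y)))"
    using fr by (intro integral_cong) (auto simp: sum_distrib_left mult_ac)
  also have "\<dots> = (\<Sum>j\<le>n. integral {0..1} (\<lambda>y. \<beta> j * (h y * cos (2*pi*real j*y))))"
    by (rule integral_sum) (auto intro!: integrable_on_mult_right intj)
  also have "\<dots> = (\<Sum>j\<le>n. \<beta> j * integral {0..1} (\<lambda>y. h y * cos (2*pi*real j*y)))"
    by (intro sum.cong refl) simp
  also have "\<dots> = 0" by (simp add: ho)
  finally show ?thesis .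
qed

lemma complete_cos:
  fixes h :: "real \<Rightarrow> real"
  assumes hc: "continuous_on {0..1} h"
    and hs: "\<And>y. y \<in> {0..1} \<Longrightarrow> h (1 - y) = h y"
    and ho: "\<And>m::nat. integral {0..1} (\<lambda>y. h y * cos (2*pi*real m*y)) = 0"
    and y: "y \<in> {0..1}"
  shows "h y = 0"
proof -
  define E where "E u = h (arccos u / (2*pi))" for u
  have Ec: "continuous_on {-1..1} E"
    unfolding E_def
  proof (rule continuous_on_compose2[OF hc])
    show "continuous_on {-1..1} (\<lambda>x. arccos x / (2 * pi))"
      by (intro continuous_on_divide continuous_on_arccos' continuous_on_const) auto
    show "(\<lambda>x. arccos x / (2 * pi)) ` {-1..1} \<subseteq> {0..1}"
    proof
      fix z assume "z \<in> (\<lambda>x. arccos x / (2 * pi)) ` {-1..1}"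
      then obtain u where u: "u \<in> {-1..1}" "z = arccos u / (2*pi)" by auto
      have "0 \<le> arccos u" "arccos u \<le> pi" using u arccos_lbound arccos_ubound by auto
      moreover have "arccos u / (2*pi) \<le> 1" using \<open>arccos u \<le> pi\<close> pi_gt_zero by (simp add: divide_le_eq) (use pi_gt_zero in linarith)
      ultimately show "z \<in> {0..1}" using u(2) by simp
    qed
  qed
  have hE: "h y = E (cos (2*pi*y))" if y: "y \<in> {0..1}" for y
  proof (cases "y \<le> 1/2")
    case True
    have "arccos (cos (2*pi*y)) = 2*pi*y" using y True by (intro arccos_cos) auto
    then show ?thesis unfolding E_def by simp
  next
    case False
    have "arccos (cos (2*pi*(1-y))) = 2*pi*(1-y)" using y False by (intro arccos_cos) auto
    moreover have "cos (2*pi*(1-y)) = cos (2*pi*y)"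
    proof -
      have "cos (2*pi*(1-y)) = cos (2*pi - 2*pi*y)" by (simp add: algebra_simps)
      also have "\<dots> = cos (2*pi*y)" by (simp add: cos_diff)
      finally show ?thesis .
    qed
    ultimately have "E (cos (2*pi*y)) = h (1 - y)" unfolding E_def by (metis pi_gt_zero less_irrefl nonzero_mult_div_cancel_left mult_eq_0_iff zero_neq_numeral)
    then show ?thesis using hs[OF y] by simp
  qed
  have hint: "(\<lambda>y. \<bar>h y\<bar>) integrable_on {0..1}"
    by (intro integrable_continuous_interval continuous_intros hc)
  define B where "B = integral {0..1} (\<lambda>y. \<bar>h y\<bar>)"
  have B0: "B \<ge> 0" unfolding B_def by (rule integral_nonneg[OF hint]) auto
  have hEi: "(\<lambda>y. h y * E (cos (2*pi*y))) integrable_on {0..1}"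
  proof -
    have "(\<lambda>y. h y * h y) integrable_on {0..1}"
      by (intro integrable_continuous_interval continuous_intros hc)
    thus ?thesis by (subst integrable_cong[where g="\<lambda>y. h y * h y"]) (auto simp: hE)
  qed
  have sq: "integral {0..1} (\<lambda>y. h y * h y) \<le> e" if e: "e > 0" for e
  proof -
    define \<epsilon> where "\<epsilon> = e / (B + 1)"
    have \<epsilon>: "\<epsilon> > 0" using e B0 by (simp add: \<epsilon>_def)
    obtain P where P: "real_polynomial_function P" "\<And>x. x \<in> {-1..1} \<Longrightarrow> \<bar>E x - P x\<bar> < \<epsilon>"
      using Stone_Weierstrass_real_polynomial_function[OF compact_Icc Ec \<epsilon>] by blast
    have P0: "integral {0..1} (\<lambda>y. h y * P (cos (2*pi*y))) = 0"
      using trigc_integral[OF hc ho trigc_poly[OF P(1)]] by simp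
    have Pc: "continuous_on UNIV P"
      using P(1) continuous_on_polymonial_function real_polynomial_function_eq by blast
    have hPi: "(\<lambda>y. h y * P (cos (2*pi*y))) integrable_on {0..1}"
      by (intro integrable_continuous_interval continuous_intros hc continuous_on_compose2[OF Pc]) auto
    have "integral {0..1} (\<lambda>y. h y * h y) = integral {0..1} (\<lambda>y. h y * E (cos (2*pi*y)))"
      by (intro integral_cong) (simp add: hE[symmetric])
    also have "\<dots> = integral {0..1} (\<lambda>y. h y * E (cos (2*pi*y))) - integral {0..1} (\<lambda>y. h y * P (cos (2*pi*y)))"
      using P0 by simp
    also have "\<dots> = integral {0..1} (\<lambda>y. h y * E (cos (2*pi*y)) - h y * P (cos (2*pi*y)))"
      by (rule integral_diff[OF hEi hPi, symmetric])
    also have "\<dots> \<le> integral {0..1} (\<lambda>y. \<epsilon> * \<bar>h y\<bar>)"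
    proof (rule integral_le)
      show "(\<lambda>y. h y * E (cos (2*pi*y)) - h y * P (cos (2*pi*y))) integrable_on {0..1}"
        using hEi hPi by (rule integrable_diff)
      show "(\<lambda>y. \<epsilon> * \<bar>h y\<bar>) integrable_on {0..1}" using hint by (rule integrable_on_mult_right)
      fix y :: real assume "y \<in> {0..1}"
      have "\<bar>E (cos (2*pi*y)) - P (cos (2*pi*y))\<bar> \<le> \<epsilon>" using P(2)[of "cos (2*pi*y)"] by auto
      hence "\<bar>h y\<bar> * \<bar>E (cos (2*pi*y)) - P (cos (2*pi*y))\<bar> \<le> \<bar>h y\<bar> * \<epsilon>" by (rule mult_left_mono) simp
      thus "h y * E (cos (2*pi*y)) - h y * P (cos (2*pi*y)) \<le> \<epsilon> * \<bar>h y\<bar>"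
        by (simp add: right_diff_distrib[symmetric] abs_mult mult_ac) (metis abs_ge_self abs_mult order.trans mult.commute)
    qed
    also have "\<dots> = \<epsilon> * B" unfolding B_def by simp
    also have "\<dots> \<le> e" using e B0 by (simp add: \<epsilon>_def field_simps)
    finally show ?thesis .
  qed
  have sqi: "(\<lambda>y. h y * h y) integrable_on {0..1}"
    by (intro integrable_continuous_interval continuous_intros hc)
  have "integral {0..1} (\<lambda>y. h y * h y) \<le> 0"
    using sq by (metis field_le_epsilon add_0)
  moreover have "integral {0..1} (\<lambda>y. h y * h y) \<ge> 0" by (rule integral_nonneg[OF sqi]) auto
  ultimately have "((\<lambda>y. h y * h y) has_integral 0) {0..1}"
    using sqi by (metis has_integral_integral order.antisym)
  hence "h y * h y = 0"
    using has_integral_0_cbox_imp_0[of 0 1 "\<lambda>y. h y * h y" y] y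
    by (auto intro!: continuous_intros hc)
  thus ?thesis by simp
qed


lemma int_cos_2pi:
  fixes k :: int
  shows "((\<lambda>y. cos (2*pi*k*y)) has_integral (if k = 0 then 1 else 0)) {0..1}"
proof (cases "k = 0")
  case True
  then show ?thesis using has_integral_const_real[of 1 0 1] by simp
next
  case False
  have "((\<lambda>y. cos (2*pi*k*y)) has_integral (sin (2*pi*k*1)/(2*pi*k) - sin (2*pi*k*0)/(2*pi*k))) {0..1}"
  proof (rule fundamental_theorem_of_calculus)
    fix x :: real assume "x \<in> {0..1}"
    show "((\<lambda>y. sin (2*pi*k*y)/(2*pi*k)) has_vector_derivative cos (2*pi*k*x)) (at x within {0..1})"
      unfolding has_real_derivative_iff_has_vector_derivative[symmetric]
      using False by (auto intro!: derivative_eq_intros)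
  qed simp
  moreover have "sin (2*pi*k*1) = 0" using sin_integer_2pi[of "of_int k"] by simp
  ultimately show ?thesis using False by simp
qed

lemma cos_ortho:
  fixes n m :: nat
  shows "((\<lambda>y. cos (2*pi*n*y) * cos (2*pi*m*y)) has_integral
           (if n = m then (if m = 0 then 1 else 1/2) else 0)) {0..1}"
proof -
  have eq: "cos (2*pi*n*y) * cos (2*pi*m*y) = 1/2 * cos (2*pi*(real n - real m)*y) + 1/2 * cos (2*pi*(real n + real m)*y)" for y
    unfolding cos_times_cos by (simp add: algebra_simps)
  have c1: "((\<lambda>y. cos (2*pi*(real n - real m)*y)) has_integral (if n = m then 1 else 0)) {0..1}"
    using int_cos_2pi[of "int n - int m"] by simp
  have c2: "((\<lambda>y. cos (2*pi*(real n + real m)*y)) has_integral (if n = 0 \<and> m = 0 then 1 else 0)) {0..1}"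
  proof -
    have e: "(int n + int m = 0) = (n = 0 \<and> m = 0)" by auto
    show ?thesis using int_cos_2pi[of "int n + int m"] by (simp only: e of_int_add of_int_of_nat_eq)
  qed
  have "((\<lambda>y. 1/2 * cos (2*pi*(real n - real m)*y) + 1/2 * cos (2*pi*(real n + real m)*y)) has_integral
        (1/2 * (if n = m then 1 else 0) + 1/2 * (if n = 0 \<and> m = 0 then 1 else 0))) {0..1}"
    by (intro has_integral_add has_integral_mult_right c1 c2)
  thus ?thesis unfolding eq by (auto split: if_splits)
qed

definition gs :: "real \<Rightarrow> real \<Rightarrow> real" where "gs a t = exp (-(pi*a*t^2))"
definition Lt :: "real \<Rightarrow> nat \<Rightarrow> real \<Rightarrow> real" where "Lt a n y = gs a (y + real n) + gs a (y - real n - 1)"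
definition Lf :: "real \<Rightarrow> real \<Rightarrow> real" where "Lf a y = (\<Sum>n. Lt a n y)"
definition bc :: "real \<Rightarrow> nat \<Rightarrow> real" where "bc a n = (if n = 0 then 1 else 2) * exp (-(pi*(real n)^2/a)) / sqrt a"
definition Rf :: "real \<Rightarrow> real \<Rightarrow> real" where "Rf a y = (\<Sum>n. bc a n * cos (2*pi*real n*y))"

lemma nat_le_sq: "real n \<le> real n ^ 2"
proof (cases n)
  case 0 then show ?thesis by simp
next
  case (Suc k)
  hence "real n * 1 \<le> real n * real n" by (intro mult_left_mono) auto
  thus ?thesis by (simp add: power2_eq_square)
qed

lemma exp_sq_le:
  assumes "c \<ge> 0" "real n \<le> t^2"
  shows "exp (-(c*t^2)) \<le> exp (-c) ^ n"
proof -
  have "exp (-c) ^ n = exp (-(c * real n))" by (simp add: exp_of_nat_mult[symmetric] mult_ac)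
  moreover have "c * real n \<le> c * t^2" using assms by (intro mult_left_mono) auto
  ultimately show ?thesis by simp
qed

lemma Lt_bound:
  assumes a: "a > 0" and y: "y \<in> {0..1}"
  shows "\<bar>Lt a n y\<bar> \<le> 2 * exp (-(pi*a)) ^ n"
proof -
  have "real n \<le> (y + real n)^2"
  proof -
    have "real n ^ 2 \<le> (y + real n)^2" using y by (intro power_mono) auto
    thus ?thesis using nat_le_sq[of n] by linarith
  qed
  hence 1: "gs a (y + real n) \<le> exp (-(pi*a)) ^ n" unfolding gs_def using a by (intro exp_sq_le) auto
  have "real n \<le> (y - real n - 1)^2"
  proof -
    have "real n ^ 2 \<le> (real n + 1 - y)^2" using y by (intro power_mono) auto
    also have "\<dots> = (y - real n - 1)^2" by (simp add: power2_eq_square algebra_simps)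
    finally show ?thesis using nat_le_sq[of n] by linarith
  qed
  hence 2: "gs a (y - real n - 1) \<le> exp (-(pi*a)) ^ n" unfolding gs_def using a by (intro exp_sq_le) auto
  have "gs a (y + real n) \<ge> 0" "gs a (y - real n - 1) \<ge> 0" by (auto simp: gs_def)
  thus ?thesis using 1 2 unfolding Lt_def by simp
qed

lemma bc_bound:
  assumes a: "a > 0"
  shows "\<bar>bc a n\<bar> \<le> 2 / sqrt a * exp (-(pi/a)) ^ n"
proof -
  have "exp (-(pi*(real n)^2/a)) = exp (-((pi/a)*(real n)^2))" by simp
  also have "\<dots> \<le> exp (-(pi/a)) ^ n" using a nat_le_sq[of n] by (intro exp_sq_le) auto
  finally have e: "exp (-(pi*(real n)^2/a)) \<le> exp (-(pi/a)) ^ n" .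
  have "\<bar>bc a n\<bar> = (if n = 0 then 1 else 2) * exp (-(pi*(real n)^2/a)) / sqrt a"
    unfolding bc_def using a by (simp add: abs_mult)
  also have "\<dots> \<le> 2 * exp (-(pi*(real n)^2/a)) / sqrt a"
    using a by (intro divide_right_mono mult_right_mono) auto
  also have "\<dots> \<le> 2 * exp (-(pi/a)) ^ n / sqrt a"
    using a e by (intro divide_right_mono mult_left_mono) auto
  finally show ?thesis by simp
qed

lemma summable_geo_exp: "(c::real) > 0 \<Longrightarrow> summable (\<lambda>n. K * exp (-c) ^ n)"
  using summable_geometric[of "exp (-c)"] by (auto intro: summable_mult)

lemma Rf_coeff:
  fixes m :: nat
  assumes a: "a > 0"
  shows "((\<lambda>y. Rf a y * cos (2*pi*real m*y)) has_integral (exp (-(pi*(real m)^2/a)) / sqrt a)) {0..1}"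
proof -
  define f where "f n y = bc a n * (cos (2*pi*real n*y) * cos (2*pi*real m*y))" for n y
  define M where "M n = 2 / sqrt a * exp (-(pi/a)) ^ n" for n
  have fM: "norm (f n y) \<le> M n" for n y
  proof -
    have "\<bar>f n y\<bar> = \<bar>bc a n\<bar> * (\<bar>cos (2*pi*real n*y)\<bar> * \<bar>cos (2*pi*real m*y)\<bar>)"
      by (simp add: f_def abs_mult)
    also have "\<dots> \<le> \<bar>bc a n\<bar> * 1" by (intro mult_left_mono) (auto intro: mult_le_one)
    also have "\<dots> \<le> M n" using bc_bound[OF a] by (simp add: M_def)
    finally show ?thesis by simp
  qed
  have sM: "summable M" unfolding M_def using a by (intro summable_geo_exp) auto
  have ul: "uniform_limit {0..1} (\<lambda>N y. \<Sum>n<N. f n y) (\<lambda>y. \<Sum>n. f n y) sequentially"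
    by (rule Weierstrass_m_test[OF _ sM]) (use fM in auto)
  obtain I J where I: "\<And>N. ((\<lambda>y. \<Sum>n<N. f n y) has_integral I N) {0..1}"
    and J: "((\<lambda>y. \<Sum>n. f n y) has_integral J) {0..1}" and IJ: "I \<longlonglongrightarrow> J"
    by (rule uniform_limit_integral[OF ul]) (auto simp: f_def intro!: continuous_intros)
  define v where "v = exp (-(pi*(real m)^2/a)) / sqrt a"
  have "I N = (\<Sum>n<N. bc a n * (if n = m then (if m = 0 then 1 else 1/2) else 0))" for N
  proof -
    have "((\<lambda>y. \<Sum>n<N. f n y) has_integral (\<Sum>n<N. bc a n * (if n = m then (if m = 0 then 1 else 1/2) else 0))) {0..1}"
      unfolding f_def by (intro has_integral_sum finite_lessThan has_integral_mult_right cos_ortho)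
    thus ?thesis using I[of N] has_integral_unique by blast
  qed
  hence "eventually (\<lambda>N. I N = v) sequentially"
  proof -
    have "I N = v" if "N > m" for N
    proof -
      have "I N = (\<Sum>n<N. bc a n * (if n = m then (if m = 0 then 1 else 1/2) else 0))"
        using \<open>\<And>N. I N = _\<close>[of N] by blast
      also have "\<dots> = (\<Sum>n<N. if n = m then bc a n * (if m = 0 then 1 else 1/2) else 0)"
        by (intro sum.cong) auto
      also have "\<dots> = bc a m * (if m = 0 then 1 else 1/2)" using that by (simp add: sum.delta)
      also have "\<dots> = v" by (simp add: bc_def v_def)
      finally show ?thesis .
    qed
    thus ?thesis unfolding eventually_sequentially by (intro exI[of _ "Suc m"]) auto
  qed
  hence "I \<longlonglongrightarrow> v" by (rule tendsto_eventually)
  hence Jv: "J = v" using IJ LIMSEQ_unique by blast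
  have "(\<lambda>y. \<Sum>n. f n y) = (\<lambda>y. Rf a y * cos (2*pi*real m*y))"
  proof
    fix y
    have "summable (\<lambda>n. bc a n * cos (2*pi*real n*y))"
    proof (rule summable_comparison_test[OF _ sM])
      show "\<exists>N. \<forall>n\<ge>N. norm (bc a n * cos (2*pi*real n*y)) \<le> M n"
      proof (intro exI allI impI)
        fix n :: nat
        have "norm (bc a n * cos (2*pi*real n*y)) = \<bar>bc a n\<bar> * \<bar>cos (2*pi*real n*y)\<bar>" by (simp add: abs_mult)
        also have "\<dots> \<le> \<bar>bc a n\<bar> * 1" by (intro mult_left_mono) auto
        also have "\<dots> \<le> M n" using bc_bound[OF a, of n] by (simp add: M_def)
        finally show "norm (bc a n * cos (2*pi*real n*y)) \<le> M n" .
      qed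
    qed
    hence "Rf a y * cos (2*pi*real m*y) = (\<Sum>n. bc a n * cos (2*pi*real n*y) * cos (2*pi*real m*y))"
      unfolding Rf_def by (rule suminf_mult2)
    thus "(\<Sum>n. f n y) = Rf a y * cos (2*pi*real m*y)"
      unfolding f_def by (simp add: mult.assoc)
  qed
  thus ?thesis using J Jv v_def by simp
qed


lemma cos_shift_int:
  fixes k :: int and m :: nat
  shows "cos (2*pi*real m*(x + real_of_int k)) = cos (2*pi*real m*x)"
proof -
  have "2*pi*real m*(x + real_of_int k) = 2*pi*real m*x + 2*pi*real_of_int (int m * k)"
    by (simp add: algebra_simps)
  moreover have "cos (2*pi*real_of_int (int m * k)) = 1" "sin (2*pi*real_of_int (int m * k)) = 0"
    by (auto intro: cos_integer_2pi sin_integer_2pi)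
  ultimately show ?thesis by (simp add: cos_add)
qed

definition Fm :: "real \<Rightarrow> nat \<Rightarrow> real \<Rightarrow> real" where "Fm a m t = gs a t * cos (2*pi*real m*t)"

lemma Fm_cont: "continuous_on S (Fm a m)"
  unfolding Fm_def gs_def by (intro continuous_intros)

lemma Fm_int: "Fm a m integrable_on {u..v}"
  by (rule integrable_continuous_interval[OF Fm_cont])

lemma shift1:
  "integral {0..1} (\<lambda>y. gs a (y + real n) * cos (2*pi*real m*y)) = integral {real n..real n+1} (Fm a m)"
proof -
  have "integral {real n - real n..real n + 1 - real n} (\<lambda>x. Fm a m (x + real n)) = integral {real n..real n+1} (Fm a m)"
    by (rule integral_shift_real_ivl)
  moreover have "integral {0..1} (\<lambda>x. Fm a m (x + real n)) = integral {0..1} (\<lambda>y. gs a (y + real n) * cos (2*pi*real m*y))"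
    using cos_shift_int[of m _ "int n"] by (intro integral_cong) (simp add: Fm_def)
  ultimately show ?thesis by simp
qed

lemma shift2:
  "integral {0..1} (\<lambda>y. gs a (y - real n - 1) * cos (2*pi*real m*y)) = integral {-(real n+1)..-real n} (Fm a m)"
proof -
  have "integral {-(real n+1) - (-(real n+1))..-real n - (-(real n+1))} (\<lambda>x. Fm a m (x + (-(real n+1)))) = integral {-(real n+1)..-real n} (Fm a m)"
    by (rule integral_shift_real_ivl)
  moreover have "integral {0..1} (\<lambda>x. Fm a m (x + (-(real n+1)))) = integral {0..1} (\<lambda>y. gs a (y - real n - 1) * cos (2*pi*real m*y))"
  proof (intro integral_cong)
    fix x
    have "cos (2*pi*real m*(x + real_of_int (-(int n + 1)))) = cos (2*pi*real m*x)" by (rule cos_shift_int)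
    thus "Fm a m (x + (-(real n+1))) = gs a (x - real n - 1) * cos (2*pi*real m*x)"
      by (simp add: Fm_def algebra_simps)
  qed
  ultimately show ?thesis by simp
qed

lemma sum_tiles:
  "(\<Sum>n<N. integral {real n..real n+1} (Fm a m) + integral {-(real n+1)..-real n} (Fm a m)) = integral {-real N..real N} (Fm a m)"
proof (induction N)
  case 0
  then show ?case by simp
next
  case (Suc N)
  have "integral {-(real N+1)..-real N} (Fm a m) + integral {-real N..real N+1} (Fm a m) = integral {-(real N+1)..real N+1} (Fm a m)"
    by (intro Henstock_Kurzweil_Integration.integral_combine Fm_int) auto
  moreover have "integral {-real N..real N} (Fm a m) + integral {real N..real N+1} (Fm a m) = integral {-real N..real N+1} (Fm a m)"
    by (intro Henstock_Kurzweil_Integration.integral_combine Fm_int) auto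
  ultimately show ?case using Suc by (simp add: algebra_simps)
qed

lemma gs_integrable: "a > 0 \<Longrightarrow> gs a integrable_on UNIV"
  using gauss_fourier[of a 0] unfolding gs_def by (auto simp: integrable_on_def)

lemma improper_lim:
  assumes a: "a > 0"
  shows "(\<lambda>N. integral {-real N..real N} (Fm a m)) \<longlonglongrightarrow> exp (-(pi*(real m)^2/a)) / sqrt a"
proof -
  define fk where "fk k x = (if x \<in> {-real k..real k} then Fm a m x else 0)" for k x
  have "(\<lambda>k. integral UNIV (fk k)) \<longlonglongrightarrow> integral UNIV (Fm a m)"
  proof (rule dominated_convergence(2))
    show "fk k integrable_on UNIV" for k unfolding fk_def integrable_restrict_UNIV by (rule Fm_int)
    show "gs a integrable_on UNIV" by (rule gs_integrable[OF a])
    show "norm (fk k x) \<le> gs a x" for k x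
      by (auto simp: fk_def Fm_def abs_mult gs_def intro!: mult_le_one[of _ 1, simplified] mult_right_le_one_le)
    show "(\<lambda>k. fk k x) \<longlonglongrightarrow> Fm a m x" for x
    proof (rule tendsto_eventually)
      obtain K :: nat where "\<bar>x\<bar> \<le> real K" using real_arch_simple by blast
      hence "\<forall>k\<ge>K. fk k x = Fm a m x" by (auto simp: fk_def)
      thus "\<forall>\<^sub>F k in sequentially. fk k x = Fm a m x" unfolding eventually_sequentially by blast
    qed
  qed
  moreover have "integral UNIV (fk k) = integral {-real k..real k} (Fm a m)" for k
    unfolding fk_def by (rule integral_restrict_UNIV)
  moreover have "integral UNIV (Fm a m) = exp (-(pi*(real m)^2/a)) / sqrt a"
    using gauss_fourier[OF a, of "real m"] unfolding Fm_def gs_def by (rule integral_unique)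
  ultimately show ?thesis by simp
qed

lemma Lt_summable:
  assumes a: "a > 0" and y: "y \<in> {0..1}"
  shows "summable (\<lambda>n. Lt a n y)"
proof (rule summable_comparison_test[OF _ summable_geo_exp[of "pi*a" 2]])
  show "\<exists>N. \<forall>n\<ge>N. norm (Lt a n y) \<le> 2 * exp (- (pi * a)) ^ n" using Lt_bound[OF a y] by auto
qed (use a in auto)

lemma Lf_coeff:
  fixes m :: nat
  assumes a: "a > 0"
  shows "((\<lambda>y. Lf a y * cos (2*pi*real m*y)) has_integral (exp (-(pi*(real m)^2/a)) / sqrt a)) {0..1}"
proof -
  define f where "f n y = Lt a n y * cos (2*pi*real m*y)" for n y
  define M where "M n = 2 * exp (-(pi*a)) ^ n" for n
  have fM: "norm (f n y) \<le> M n" if "y \<in> {0..1}" for n y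
  proof -
    have "\<bar>f n y\<bar> = \<bar>Lt a n y\<bar> * \<bar>cos (2*pi*real m*y)\<bar>" by (simp add: f_def abs_mult)
    also have "\<dots> \<le> \<bar>Lt a n y\<bar> * 1" by (intro mult_left_mono) auto
    also have "\<dots> \<le> M n" using Lt_bound[OF a that] by (simp add: M_def)
    finally show ?thesis by simp
  qed
  have sM: "summable M" unfolding M_def using a by (intro summable_geo_exp) auto
  have ul: "uniform_limit {0..1} (\<lambda>N y. \<Sum>n<N. f n y) (\<lambda>y. \<Sum>n. f n y) sequentially"
    by (rule Weierstrass_m_test[OF _ sM]) (use fM in auto)
  obtain I J where I: "\<And>N. ((\<lambda>y. \<Sum>n<N. f n y) has_integral I N) {0..1}"
    and J: "((\<lambda>y. \<Sum>n. f n y) has_integral J) {0..1}" and IJ: "I \<longlonglongrightarrow> J"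
    by (rule uniform_limit_integral[OF ul]) (auto simp: f_def Lt_def gs_def intro!: continuous_intros)
  have IN: "I N = integral {-real N..real N} (Fm a m)" for N
  proof -
    have "((\<lambda>y. \<Sum>n<N. f n y) has_integral (\<Sum>n<N. integral {real n..real n+1} (Fm a m) + integral {-(real n+1)..-real n} (Fm a m))) {0..1}"
    proof (intro has_integral_sum finite_lessThan)
      fix n assume "n \<in> {..<N}"
      have i1: "((\<lambda>y. gs a (y + real n) * cos (2*pi*real m*y)) has_integral integral {real n..real n+1} (Fm a m)) {0..1}"
        unfolding shift1[symmetric] by (intro integrable_integral integrable_continuous_interval) (auto simp: gs_def intro!: continuous_intros)
      have i2: "((\<lambda>y. gs a (y - real n - 1) * cos (2*pi*real m*y)) has_integral integral {-(real n+1)..-real n} (Fm a m)) {0..1}"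
        unfolding shift2[symmetric] by (intro integrable_integral integrable_continuous_interval) (auto simp: gs_def intro!: continuous_intros)
      show "(f n has_integral integral {real n..real n+1} (Fm a m) + integral {-(real n+1)..-real n} (Fm a m)) {0..1}"
        using has_integral_add[OF i1 i2] unfolding f_def[abs_def] Lt_def by (simp add: algebra_simps)
    qed
    thus ?thesis using I[of N] has_integral_unique sum_tiles by metis
  qed
  have "I \<longlonglongrightarrow> exp (-(pi*(real m)^2/a)) / sqrt a" unfolding IN by (rule improper_lim[OF a])
  hence Jv: "J = exp (-(pi*(real m)^2/a)) / sqrt a" using IJ LIMSEQ_unique by blast
  have "((\<lambda>y. \<Sum>n. f n y) has_integral (exp (-(pi*(real m)^2/a)) / sqrt a)) {0..1}" using J Jv by simp
  moreover have "(\<Sum>n. f n y) = Lf a y * cos (2*pi*real m*y)" if "y \<in> {0..1}" for y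
    unfolding f_def Lf_def by (rule suminf_mult2[symmetric, OF Lt_summable[OF a that]])
  ultimately show ?thesis by (subst has_integral_cong[where g="\<lambda>y. \<Sum>n. f n y"]) auto
qed

lemma Lf_cont:
  assumes a: "a > 0"
  shows "continuous_on {0..1} (Lf a)"
proof -
  have ul: "uniform_limit {0..1} (\<lambda>N y. \<Sum>n<N. Lt a n y) (\<lambda>y. \<Sum>n. Lt a n y) sequentially"
    by (rule Weierstrass_m_test[OF _ summable_geo_exp[of "pi*a" 2]]) (use a Lt_bound[OF a] in auto)
  have "continuous_on {0..1} (\<lambda>y. \<Sum>n. Lt a n y)"
    by (rule uniform_limit_theorem[OF _ ul]) (auto simp: Lt_def gs_def intro!: continuous_intros always_eventually)
  thus ?thesis unfolding Lf_def[abs_def] .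
qed

lemma Rf_cont:
  assumes a: "a > 0"
  shows "continuous_on {0..1} (Rf a)"
proof -
  have b: "norm (bc a n * cos (2*pi*real n*y)) \<le> 2 / sqrt a * exp (-(pi/a)) ^ n" for n y
  proof -
    have "norm (bc a n * cos (2*pi*real n*y)) = \<bar>bc a n\<bar> * \<bar>cos (2*pi*real n*y)\<bar>" by (simp add: abs_mult)
    also have "\<dots> \<le> \<bar>bc a n\<bar> * 1" by (intro mult_left_mono) auto
    also have "\<dots> \<le> 2 / sqrt a * exp (-(pi/a)) ^ n" using bc_bound[OF a, of n] by simp
    finally show ?thesis .
  qed
  have ul: "uniform_limit {0..1} (\<lambda>N y. \<Sum>n<N. bc a n * cos (2*pi*real n*y)) (\<lambda>y. \<Sum>n. bc a n * cos (2*pi*real n*y)) sequentially"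
    by (rule Weierstrass_m_test[OF _ summable_geo_exp[of "pi/a" "2 / sqrt a"]]) (use a b in auto)
  have "continuous_on {0..1} (\<lambda>y. \<Sum>n. bc a n * cos (2*pi*real n*y))"
    by (rule uniform_limit_theorem[OF _ ul]) (auto intro!: continuous_intros always_eventually)
  thus ?thesis unfolding Rf_def[abs_def] .
qed

lemma gs_even: "gs a (-t) = gs a t" by (simp add: gs_def)

lemma Lf_sym: "Lf a (1 - y) = Lf a y"
proof -
  have "Lt a n (1 - y) = Lt a n y" for n
  proof -
    have "gs a (1 - y + real n) = gs a (y - real n - 1)" using gs_even[of a "y - real n - 1"] by (simp add: algebra_simps)
    moreover have "gs a (1 - y - real n - 1) = gs a (y + real n)" using gs_even[of a "y + real n"] by (simp add: algebra_simps)
    ultimately show ?thesis by (simp add: Lt_def)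
  qed
  thus ?thesis by (simp add: Lf_def)
qed

lemma Rf_sym: "Rf a (1 - y) = Rf a y"
proof -
  have "cos (2*pi*real n*(1 - y)) = cos (2*pi*real n*y)" for n
  proof -
    have "cos (2*pi*real n*(1 - y)) = cos (-(2*pi*real n*y) + 2*pi*real_of_int (int n))" by (simp add: algebra_simps)
    also have "\<dots> = cos (2*pi*real n*y)"
      using cos_integer_2pi[of "real_of_int (int n)"] sin_integer_2pi[of "real_of_int (int n)"] by (simp add: cos_add cos_diff)
    finally show ?thesis .
  qed
  thus ?thesis by (simp add: Rf_def)
qed

theorem poisson_gauss:
  assumes a: "a > 0" and y: "y \<in> {0..1}"
  shows "Lf a y = Rf a y"
proof -
  have "(\<lambda>y. Lf a y - Rf a y) y = 0"
  proof (rule complete_cos[OF _ _ _ y])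
    show "continuous_on {0..1} (\<lambda>y. Lf a y - Rf a y)" using Lf_cont[OF a] Rf_cont[OF a] by (intro continuous_intros)
    show "Lf a (1 - y) - Rf a (1 - y) = Lf a y - Rf a y" for y by (simp add: Lf_sym Rf_sym)
    show "integral {0..1} (\<lambda>y. (Lf a y - Rf a y) * cos (2*pi*real m*y)) = 0" for m :: nat
    proof -
      have "((\<lambda>y. Lf a y * cos (2*pi*real m*y) - Rf a y * cos (2*pi*real m*y)) has_integral
             (exp (-(pi*(real m)^2/a)) / sqrt a - exp (-(pi*(real m)^2/a)) / sqrt a)) {0..1}"
        by (intro has_integral_diff Lf_coeff Rf_coeff a)
      thus ?thesis by (simp add: left_diff_distrib integral_unique)
    qed
  qed
  thus ?thesis by simp
qed


definition ES :: "(nat \<Rightarrow> real) \<Rightarrow> (nat \<Rightarrow> real) \<Rightarrow> real \<Rightarrow> real" where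
  "ES c l x = (\<Sum>n. c n * exp (-(l n * x)))"

definition sx :: "(nat \<Rightarrow> real) \<Rightarrow> bool" where
  "sx c \<longleftrightarrow> (\<forall>x>0. summable (\<lambda>n. \<bar>c n\<bar> * exp (-(x * real n))))"

lemma sx_bounded:
  assumes "\<And>n. \<bar>c n\<bar> \<le> K" shows "sx c"
  unfolding sx_def
proof (intro allI impI)
  fix x :: real assume x: "x > 0"
  show "summable (\<lambda>n. \<bar>c n\<bar> * exp (-(x * real n)))"
  proof (rule summable_comparison_test[OF _ summable_geo_exp[OF x, of K]])
    show "\<exists>N. \<forall>n\<ge>N. norm (\<bar>c n\<bar> * exp (-(x * real n))) \<le> K * exp (-x) ^ n"
    proof (intro exI allI impI)
      fix n :: nat
      have "exp (-(x * real n)) = exp (-x) ^ n" by (simp add: exp_of_nat_mult[symmetric] mult_ac)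
      thus "norm (\<bar>c n\<bar> * exp (-(x * real n))) \<le> K * exp (-x) ^ n"
        using assms[of n] by (simp add: abs_mult mult_right_mono)
    qed
  qed
qed

lemma sq_exp_bound:
  assumes x: "x > 0"
  shows "(real n + 1)^2 \<le> 8 / x^2 * exp (x/2) * exp (x/2 * real n)"
proof -
  define t where "t = x * (real n + 1) / 2"
  have t0: "t \<ge> 0" using x by (simp add: t_def)
  have "t^2/2 \<le> exp t" using exp_lower_Taylor_quadratic[OF t0] t0 by simp
  moreover have "t^2/2 = x^2/8 * (real n + 1)^2" by (simp add: t_def power2_eq_square field_simps)
  moreover have "exp t = exp (x/2) * exp (x/2 * real n)" by (simp add: t_def exp_add[symmetric] algebra_simps)
  ultimately have "x^2/8 * (real n + 1)^2 \<le> exp (x/2) * exp (x/2 * real n)" by simp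
  thus ?thesis using x by (simp add: field_simps)
qed

lemma sx_mult:
  assumes c: "sx c" and d: "\<And>n. \<bar>d n\<bar> \<le> K * (real n + 1)^2"
  shows "sx (\<lambda>n. d n * c n)"
  unfolding sx_def
proof (intro allI impI)
  fix x :: real assume x: "x > 0"
  define B where "B = K * (8 / x^2 * exp (x/2))"
  have "\<bar>d 0\<bar> \<le> K" using d[of 0] by simp
  hence K0: "K \<ge> 0" using abs_ge_zero[of "d 0"] by linarith
  have s: "summable (\<lambda>n. \<bar>c n\<bar> * exp (-(x/2 * real n)))" by (rule c[unfolded sx_def, rule_format]) (use x in simp)
  show "summable (\<lambda>n. \<bar>d n * c n\<bar> * exp (-(x * real n)))"
  proof (rule summable_comparison_test[OF _ summable_mult[OF s, of B]])
    show "\<exists>N. \<forall>n\<ge>N. norm (\<bar>d n * c n\<bar> * exp (-(x * real n))) \<le> B * (\<bar>c n\<bar> * exp (-(x/2 * real n)))"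
    proof (intro exI allI impI)
      fix n :: nat
      have "\<bar>d n\<bar> \<le> B * exp (x/2 * real n)"
        using d[of n] mult_left_mono[OF sq_exp_bound[OF x, of n] K0] by (simp add: B_def mult_ac)
      hence "\<bar>d n\<bar> * (\<bar>c n\<bar> * exp (-(x * real n))) \<le> B * exp (x/2 * real n) * (\<bar>c n\<bar> * exp (-(x * real n)))"
        by (intro mult_right_mono) auto
      also have "\<dots> = B * (\<bar>c n\<bar> * exp (-(x/2 * real n)))"
      proof -
        have "exp (x/2 * real n) * exp (-(x * real n)) = exp (-(x/2 * real n))" by (simp add: exp_add[symmetric])
        thus ?thesis by (metis (no_types, opaque_lifting) mult.assoc mult.left_commute)
      qed
      finally show "norm (\<bar>d n * c n\<bar> * exp (-(x * real n))) \<le> B * (\<bar>c n\<bar> * exp (-(x/2 * real n)))"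
        by (simp add: abs_mult mult_ac)
    qed
  qed
qed

definition lok :: "(nat \<Rightarrow> real) \<Rightarrow> real \<Rightarrow> bool" where
  "lok l K \<longleftrightarrow> (\<forall>n. real n \<le> l n \<and> l n \<le> K * (real n + 1)^2)"

lemma ES_term_bound:
  assumes "lok l K" "x > 0" "y \<ge> x"
  shows "\<bar>c n * exp (-(l n * y))\<bar> \<le> \<bar>c n\<bar> * exp (-(x * real n))"
proof -
  have "x * real n \<le> l n * y"
  proof -
    have "x * real n \<le> y * real n" using assms by (intro mult_right_mono) auto
    also have "\<dots> \<le> y * l n" using assms unfolding lok_def by (intro mult_left_mono) auto
    finally show ?thesis by (simp add: mult_ac)
  qed
  thus ?thesis by (simp add: abs_mult mult_left_mono)
qed

lemma ES_summable:
  assumes "sx c" "lok l K" "x > 0"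
  shows "summable (\<lambda>n. \<bar>c n * exp (-(l n * x))\<bar>)" "summable (\<lambda>n. c n * exp (-(l n * x)))"
proof -
  show "summable (\<lambda>n. \<bar>c n * exp (-(l n * x))\<bar>)"
    by (rule summable_comparison_test[of _ "\<lambda>n. \<bar>c n\<bar> * exp (-(x * real n))"])
       (use assms ES_term_bound[OF assms(2,3), of x] in \<open>auto simp: sx_def\<close>)
  thus "summable (\<lambda>n. c n * exp (-(l n * x)))" by (rule summable_rabs_cancel)
qed

lemma lok_abs: "lok l K \<Longrightarrow> \<bar>l n\<bar> \<le> K * (real n + 1)^2"
  unfolding lok_def by (metis abs_of_nonneg of_nat_0_le_iff order.trans)

lemma ES_deriv:
  assumes c: "sx c" and l: "lok l K" and x: "x > 0"
  shows "(ES c l has_real_derivative ES (\<lambda>n. - l n * c n) l x) (at x)"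
proof -
  define S where "S = {x/2<..}"
  have c': "sx (\<lambda>n. - l n * c n)" by (rule sx_mult[OF c]) (use lok_abs[OF l] in auto)
  have der: "((\<lambda>y. c n * exp (-(l n * y))) has_field_derivative (- l n * c n) * exp (-(l n * y))) (at y within S)" for n y
    by (auto intro!: derivative_eq_intros simp: algebra_simps)
  have "summable (\<lambda>n. (- l n * c n) * exp (-(l n * y)))" if "y \<in> S" for y
    using ES_summable(2)[OF c' l, of y] that x by (auto simp: S_def)
  have uc: "uniformly_convergent_on S (\<lambda>N y. \<Sum>n<N. (- l n * c n) * exp (-(l n * y)))"
  proof (rule Weierstrass_m_test')
    show "summable (\<lambda>n. \<bar>- l n * c n\<bar> * exp (-(x/2 * real n)))" by (rule c'[unfolded sx_def, rule_format]) (use x in simp)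
    fix n y assume "y \<in> S"
    thus "norm ((- l n * c n) * exp (-(l n * y))) \<le> \<bar>- l n * c n\<bar> * exp (-(x/2 * real n))"
      using ES_term_bound[OF l, of "x/2" y "\<lambda>n. - l n * c n" n] x by (auto simp: S_def)
  qed
  have "((\<lambda>y. \<Sum>n. c n * exp (-(l n * y))) has_field_derivative (\<Sum>n. (- l n * c n) * exp (-(l n * x)))) (at x)"
    by (rule has_field_derivative_series'(2)[OF _ der uc, of x])
       (use x ES_summable(2)[OF c l x] in \<open>auto simp: S_def interior_open[OF open_greaterThan]\<close>)
  thus ?thesis unfolding ES_def[abs_def] .
qed

lemma ES_cont: "sx c \<Longrightarrow> lok l K \<Longrightarrow> x > 0 \<Longrightarrow> isCont (ES c l) x"
  using ES_deriv DERIV_isCont by blast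


definition L3 :: "nat \<Rightarrow> real" where "L3 n = pi * (real n)^2"
definition L2 :: "nat \<Rightarrow> real" where "L2 n = pi * (real n + 1/2)^2"
definition c3 :: "nat \<Rightarrow> real" where "c3 n = (if n = 0 then 1 else 2)"
definition c4 :: "nat \<Rightarrow> real" where "c4 n = (if n = 0 then 1 else 2 * (-1)^n)"
definition c2 :: "nat \<Rightarrow> real" where "c2 n = 2"
definition T3 :: "real \<Rightarrow> real" where "T3 = ES c3 L3"
definition T4 :: "real \<Rightarrow> real" where "T4 = ES c4 L3"
definition T2 :: "real \<Rightarrow> real" where "T2 = ES c2 L2"

lemma pi_ge_one: "pi \<ge> 1" using pi_ge_two by simp

lemma lok_L3: "lok L3 pi"
  unfolding lok_def L3_def
proof
  fix n
  have "real n \<le> 1 * (real n)^2" using nat_le_sq[of n] by simp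
  also have "\<dots> \<le> pi * (real n)^2" by (intro mult_right_mono) (auto simp: pi_ge_one)
  finally show "real n \<le> pi * (real n)\<^sup>2 \<and> pi * (real n)\<^sup>2 \<le> pi * (real n + 1)\<^sup>2"
    by (auto intro!: mult_left_mono power_mono)
qed

lemma lok_L2: "lok L2 pi"
  unfolding lok_def L2_def
proof
  fix n
  have "real n \<le> 1 * (real n + 1/2)^2" using nat_le_sq[of n] by (simp add: power2_eq_square algebra_simps)
  also have "\<dots> \<le> pi * (real n + 1/2)^2" by (intro mult_right_mono) (auto simp: pi_ge_one)
  finally show "real n \<le> pi * (real n + 1/2)\<^sup>2 \<and> pi * (real n + 1/2)\<^sup>2 \<le> pi * (real n + 1)\<^sup>2"
    by (auto intro!: mult_left_mono power_mono)
qed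

lemma sx_c3: "sx c3" by (rule sx_bounded[of _ 2]) (simp add: c3_def)
lemma sx_c4: "sx c4" by (rule sx_bounded[of _ 2]) (simp add: c4_def abs_mult power_abs)
lemma sx_c2: "sx c2" by (rule sx_bounded[of _ 2]) (simp add: c2_def)

lemma summable_c3: "x > 0 \<Longrightarrow> summable (\<lambda>n. c3 n * exp (-(L3 n * x)))"
  using ES_summable(2)[OF sx_c3 lok_L3] .
lemma summable_e3: "x > 0 \<Longrightarrow> summable (\<lambda>n. exp (-(L3 n * x)))"
  using ES_summable(2)[OF sx_bounded[of "\<lambda>_. 1" 1] lok_L3] by simp

lemma T3_split: "x > 0 \<Longrightarrow> T3 x = 1 + 2 * (\<Sum>n. exp (-(L3 (Suc n) * x)))"
proof -
  assume x: "x > 0"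
  have "T3 x = c3 0 * exp (-(L3 0 * x)) + (\<Sum>n. c3 (Suc n) * exp (-(L3 (Suc n) * x)))"
    unfolding T3_def ES_def using suminf_split_head[OF summable_c3[OF x]] by simp
  also have "\<dots> = 1 + (\<Sum>n. 2 * exp (-(L3 (Suc n) * x)))" by (simp add: c3_def L3_def)
  also have "\<dots> = 1 + 2 * (\<Sum>n. exp (-(L3 (Suc n) * x)))"
    using summable_e3[OF x] summable_Suc_iff[where f="\<lambda>n. exp (-(L3 n * x))"] by (subst suminf_mult) auto
  finally show ?thesis .
qed

lemma trans3:
  assumes x: "x > 0"
  shows "T3 x = T3 (1/x) / sqrt x"
proof -
  have P: "Lf x 0 = Rf x 0" using poisson_gauss[OF x] by simp
  define e where "e n = exp (-(L3 n * x))" for n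
  have se: "summable e" unfolding e_def using summable_e3[OF x] .
  have gsn: "gs x (real n) = e n" "gs x (- real n - 1) = e (Suc n)" for n
    by (auto simp: gs_def e_def L3_def power2_eq_square algebra_simps)
  have "Lf x 0 = (\<Sum>n. e n + e (Suc n))" unfolding Lf_def Lt_def by (simp add: gsn)
  also have "\<dots> = (\<Sum>n. e n) + (\<Sum>n. e (Suc n))"
    using se by (intro suminf_add[symmetric]) (auto simp: summable_Suc_iff)
  also have "\<dots> = 1 + 2 * (\<Sum>n. e (Suc n))"
  proof -
    have "(\<Sum>n. e n) = e 0 + (\<Sum>n. e (Suc n))" using suminf_split_head[OF se] by simp
    moreover have "e 0 = 1" by (simp add: e_def L3_def)
    ultimately show ?thesis by simp
  qed
  also have "\<dots> = T3 x" using T3_split[OF x] by (simp add: e_def)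
  finally have 1: "Lf x 0 = T3 x" .
  have "Rf x 0 = (\<Sum>n. c3 n * exp (-(L3 n * (1/x))) / sqrt x)"
    unfolding Rf_def by (intro suminf_cong) (simp add: bc_def c3_def L3_def)
  also have "\<dots> = T3 (1/x) / sqrt x"
    unfolding T3_def ES_def using summable_c3[of "1/x"] x by (auto intro!: suminf_divide)
  finally show ?thesis using 1 P by simp
qed

lemma trans2:
  assumes x: "x > 0"
  shows "T2 x = T4 (1/x) / sqrt x"
proof -
  have P: "Lf x (1/2) = Rf x (1/2)" using poisson_gauss[OF x] by simp
  have "Lt x n (1/2) = c2 n * exp (-(L2 n * x))" for n
  proof -
    have "gs x (1/2 + real n) = exp (-(L2 n * x))" "gs x (1/2 - real n - 1) = exp (-(L2 n * x))"
      by (auto simp: gs_def L2_def power2_eq_square algebra_simps)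
    thus ?thesis by (simp add: Lt_def c2_def)
  qed
  hence 1: "Lf x (1/2) = T2 x" by (simp add: Lf_def T2_def ES_def)
  have "Rf x (1/2) = (\<Sum>n. c4 n * exp (-(L3 n * (1/x))) / sqrt x)"
    unfolding Rf_def
  proof (intro suminf_cong)
    fix n
    have "cos (2*pi*real n*(1/2)) = (-1)^n" using cos_npi[of n] by (simp add: mult_ac)
    thus "bc x n * cos (2*pi*real n*(1/2)) = c4 n * exp (-(L3 n * (1/x))) / sqrt x"
      by (simp add: bc_def c4_def L3_def)
  qed
  also have "\<dots> = T4 (1/x) / sqrt x"
    unfolding T4_def ES_def using ES_summable(2)[OF sx_c4 lok_L3, of "1/x"] x by (auto intro!: suminf_divide)
  finally show ?thesis using 1 P by simp
qed


lemma int_even_sum: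
  fixes f :: "int \<Rightarrow> real"
  assumes ev: "\<And>k. f (-k) = f k" and sm: "summable (\<lambda>n. \<bar>f (int n)\<bar>)"
  shows "(\<Sum>\<^sub>\<infinity>k. f k) = f 0 + 2 * (\<Sum>n. f (int (Suc n)))"
proof -
  have s1: "summable (\<lambda>n. f (int n))" by (rule summable_rabs_cancel[OF sm])
  have h1: "(f has_sum (\<Sum>n. f (int n))) (range int)"
  proof -
    have "((f \<circ> int) has_sum (\<Sum>n. f (int n))) UNIV"
      using norm_summable_imp_has_sum[of "f \<circ> int" "\<Sum>n. f (int n)"] sm s1 by (simp add: o_def summable_sums)
    thus ?thesis by (subst has_sum_reindex) (auto simp: inj_on_def)
  qed
  define g where "g n = - int (Suc n)" for n
  have sm2: "summable (\<lambda>n. \<bar>f (int (Suc n))\<bar>)"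
    using sm summable_Suc_iff[where f="\<lambda>n. \<bar>f (int n)\<bar>"] by simp
  have s2: "summable (\<lambda>n. f (int (Suc n)))" by (rule summable_rabs_cancel[OF sm2])
  have h2: "(f has_sum (\<Sum>n. f (int (Suc n)))) (range g)"
  proof -
    have fg: "(f \<circ> g) = (\<lambda>n. f (int (Suc n)))" by (rule ext) (simp only: o_def g_def ev)
    have "((f \<circ> g) has_sum (\<Sum>n. f (int (Suc n)))) UNIV"
      unfolding fg using norm_summable_imp_has_sum[of "\<lambda>n. f (int (Suc n))"] sm2 s2 by (simp add: summable_sums)
    thus ?thesis by (subst has_sum_reindex) (auto simp: inj_on_def g_def)
  qed
  have disj: "range int \<inter> range g = {}" by (auto simp: g_def)
  have un: "range int \<union> range g = UNIV"
  proof -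
    have "k \<in> range int \<union> range g" for k :: int
    proof (cases "k \<ge> 0")
      case True
      then obtain n where "k = int n" using nonneg_int_cases by blast
      then show ?thesis by blast
    next
      case False
      hence "k = g (nat (-k - 1))" by (simp add: g_def)
      then show ?thesis by blast
    qed
    thus ?thesis by blast
  qed
  have "(f has_sum ((\<Sum>n. f (int n)) + (\<Sum>n. f (int (Suc n))))) UNIV"
    using has_sum_Un_disjoint[OF h1 h2 disj] un by simp
  hence "(\<Sum>\<^sub>\<infinity>k. f k) = (\<Sum>n. f (int n)) + (\<Sum>n. f (int (Suc n)))" by (rule infsumI)
  also have "(\<Sum>n. f (int n)) = f 0 + (\<Sum>n. f (int (Suc n)))"
    using suminf_split_head[OF s1] by simp
  finally show ?thesis by simp
qed

lemma exp_pow_L3: "exp (-(pi*x)) ^ (n*n) = exp (-(L3 n * x))"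
proof -
  have "exp (-(pi*x)) ^ (n*n) = exp (real (n*n) * (-(pi*x)))" by (rule exp_of_nat_mult[symmetric])
  thus ?thesis by (simp add: L3_def power2_eq_square mult_ac)
qed

lemma theta3_T3:
  assumes x: "x > 0"
  shows "theta3 (exp (-(pi*x))) = T3 x"
proof -
  have "theta3 (exp (-(pi*x))) = (\<Sum>\<^sub>\<infinity>k::int. exp (-(pi*x)) ^ nat (k*k))" by (simp add: theta3_def)
  also have "\<dots> = exp (-(pi*x)) ^ nat (0*0) + 2 * (\<Sum>n. exp (-(pi*x)) ^ nat (int (Suc n) * int (Suc n)))"
  proof (rule int_even_sum)
    show "summable (\<lambda>n. \<bar>exp (-(pi*x)) ^ nat (int n * int n)\<bar>)"
      using summable_e3[OF x] by (simp add: nat_mult_distrib exp_pow_L3)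
  qed simp
  also have "\<dots> = 1 + 2 * (\<Sum>n. exp (-(L3 (Suc n) * x)))"
    by (simp only: nat_mult_distrib nat_int exp_pow_L3) (simp add: L3_def)
  also have "\<dots> = T3 x" using T3_split[OF x] by simp
  finally show ?thesis .
qed

lemma theta4_T4:
  assumes x: "x > 0"
  shows "theta4 (exp (-(pi*x))) = T4 x"
proof -
  have se: "summable (\<lambda>n. exp (-(L3 n * x)))" by (rule summable_e3[OF x])
  have "theta4 (exp (-(pi*x))) = (\<Sum>\<^sub>\<infinity>k::int. (-1) ^ nat \<bar>k\<bar> * exp (-(pi*x)) ^ nat (k*k))" by (simp add: theta4_def)
  also have "\<dots> = (-1) ^ nat \<bar>0\<bar> * exp (-(pi*x)) ^ nat (0*0) + 2 * (\<Sum>n. (-1) ^ nat \<bar>int (Suc n)\<bar> * exp (-(pi*x)) ^ nat (int (Suc n) * int (Suc n)))"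
  proof (rule int_even_sum)
    show "summable (\<lambda>n. \<bar>(-1) ^ nat \<bar>int n\<bar> * exp (-(pi*x)) ^ nat (int n * int n)\<bar>)"
      using se by (simp add: nat_mult_distrib exp_pow_L3 abs_mult power_abs)
  qed simp
  also have "\<dots> = 1 + 2 * (\<Sum>n. (-1) ^ Suc n * exp (-(L3 (Suc n) * x)))"
    by (simp only: nat_mult_distrib nat_int exp_pow_L3 abs_of_nat) (simp add: L3_def)
  also have "\<dots> = T4 x"
  proof -
    have sc: "summable (\<lambda>n. c4 n * exp (-(L3 n * x)))" using ES_summable(2)[OF sx_c4 lok_L3 x] .
    have "T4 x = c4 0 * exp (-(L3 0 * x)) + (\<Sum>n. c4 (Suc n) * exp (-(L3 (Suc n) * x)))"
      unfolding T4_def ES_def using suminf_split_head[OF sc] by simp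
    also have "\<dots> = 1 + (\<Sum>n. 2 * ((-1) ^ Suc n * exp (-(L3 (Suc n) * x))))"
      by (simp add: c4_def L3_def mult.assoc)
    also have "\<dots> = 1 + 2 * (\<Sum>n. (-1) ^ Suc n * exp (-(L3 (Suc n) * x)))"
    proof -
      have "summable (\<lambda>n. (-1) ^ Suc n * exp (-(L3 (Suc n) * x)))"
      proof (rule summable_rabs_cancel)
        show "summable (\<lambda>n. \<bar>(-1) ^ Suc n * exp (-(L3 (Suc n) * x))\<bar>)"
          using se summable_Suc_iff[where f="\<lambda>n. exp (-(L3 n * x))"] by (simp add: abs_mult power_abs)
      qed
      thus ?thesis by (subst suminf_mult) auto
    qed
    finally show ?thesis by simp
  qed
  finally show ?thesis .
qed


lemma sym_deriv_zero:
  fixes f :: "real \<Rightarrow> real"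
  assumes d: "(f has_real_derivative D) (at 1)" and s: "\<And>x. x > 0 \<Longrightarrow> f (1/x) = f x"
  shows "D = 0"
proof -
  have "((\<lambda>x. f (1/x)) has_real_derivative D * (- 1)) (at 1)"
  proof -
    have i: "((\<lambda>x. 1/x) has_real_derivative - 1) (at (1::real))"
      by (auto intro!: derivative_eq_intros)
    have d1: "(f has_real_derivative D) (at (1/1))" using d by simp
    show ?thesis using DERIV_chain2[OF d1 i] .
  qed
  moreover have "((\<lambda>x. f (1/x)) has_real_derivative D) (at 1)"
    by (rule has_field_derivative_transform_within_open[OF d, of "{0<..}"]) (auto simp: s)
  ultimately have "D * (-1) = D" using DERIV_unique by blast
  thus ?thesis by simp
qed

lemma exp_pi_bound: "exp (-pi) \<le> 1/20"
proof -
  have "exp 1 \<ge> 5837465777 / 2147483648 - inverse (2 ^ 32::real)"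
    using e_approx_32 unfolding abs_le_iff by linarith
  moreover have "5837465777 / 2147483648 - inverse (2 ^ 32::real) \<ge> 2718/1000" by simp
  ultimately have e1: "exp 1 \<ge> (2718/1000::real)" by linarith
  have "(2718/1000::real)^3 \<le> exp 1 ^ 3" by (rule power_mono[OF e1]) simp
  also have "exp 1 ^ 3 = exp (3::real)" using exp_of_nat_mult[of 3 "1::real"] by simp
  also have "exp (3::real) \<le> exp pi" using pi_gt3 by simp
  finally have "(2718/1000::real)^3 \<le> exp pi" .
  moreover have "(20::real) \<le> (2718/1000)^3" by (simp add: power_divide)
  ultimately have "20 \<le> exp pi" by linarith
  thus ?thesis by (simp add: exp_minus field_simps)
qed

definition T3d where "T3d = ES (\<lambda>n. - L3 n * c3 n) L3"
definition T3dd where "T3dd = ES (\<lambda>n. - L3 n * (- L3 n * c3 n)) L3"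

lemma sx_L3_mult: "sx c \<Longrightarrow> sx (\<lambda>n. - L3 n * c n)"
  by (rule sx_mult) (use lok_abs[OF lok_L3] in auto)

lemma T3_deriv: "x > 0 \<Longrightarrow> (T3 has_real_derivative T3d x) (at x)"
  unfolding T3_def T3d_def by (rule ES_deriv[OF sx_c3 lok_L3])
lemma T3d_deriv: "x > 0 \<Longrightarrow> (T3d has_real_derivative T3dd x) (at x)"
  unfolding T3dd_def T3d_def by (rule ES_deriv[OF sx_L3_mult[OF sx_c3] lok_L3])

lemma L3_nonneg: "L3 n \<ge> 0" by (simp add: L3_def)

lemma T3_pos: "x > 0 \<Longrightarrow> T3 x > 0"
proof -
  assume x: "x > 0"
  have "0 < (\<Sum>n. c3 n * exp (-(L3 n * x)))"
    by (rule suminf_pos2[OF summable_c3[OF x], of 0]) (auto simp: c3_def)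
  thus ?thesis by (simp add: T3_def ES_def)
qed

lemma V3_deriv_pos:
  assumes x: "x \<ge> 1"
  shows "5/4 * T3d x + x * T3dd x > 0"
proof -
  have x0: "x > 0" using x by simp
  define e where "e n = exp (-(L3 n * x))" for n
  have s1: "(\<lambda>n. (- L3 n * c3 n) * e n) sums T3d x"
    unfolding T3d_def ES_def e_def using ES_summable(2)[OF sx_L3_mult[OF sx_c3] lok_L3 x0] by (simp add: summable_sums)
  have s2: "(\<lambda>n. (- L3 n * (- L3 n * c3 n)) * e n) sums T3dd x"
    unfolding T3dd_def ES_def e_def using ES_summable(2)[OF sx_L3_mult[OF sx_L3_mult[OF sx_c3]] lok_L3 x0] by (simp add: summable_sums)
  have s: "(\<lambda>n. 5/4 * ((- L3 n * c3 n) * e n) + x * ((- L3 n * (- L3 n * c3 n)) * e n)) sums (5/4 * T3d x + x * T3dd x)"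
    by (intro sums_add sums_mult s1 s2)
  have eq: "5/4 * ((- L3 n * c3 n) * e n) + x * ((- L3 n * (- L3 n * c3 n)) * e n) = c3 n * L3 n * (x * L3 n - 5/4) * e n" for n
    by (simp add: algebra_simps)
  have nn: "c3 n * L3 n * (x * L3 n - 5/4) * e n \<ge> 0" for n
  proof (cases n)
    case 0 then show ?thesis by (simp add: L3_def)
  next
    case (Suc m)
    have "x * L3 n \<ge> 1 * pi" unfolding L3_def
    proof -
      have "1 * pi \<le> x * pi" using x by (intro mult_right_mono) auto
      also have "\<dots> \<le> x * (pi * (real n)^2)"
      proof -
        have "1 \<le> (real n)^2" using Suc one_le_power[of "real n" 2] by simp
        hence "pi * 1 \<le> pi * (real n)^2" by (intro mult_left_mono) auto
        thus ?thesis using x by (intro mult_left_mono) auto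
      qed
      finally show "1 * pi \<le> x * (pi * (real n)\<^sup>2)" .
    qed
    hence "x * L3 n - 5/4 \<ge> 0" using pi_gt3 by simp
    thus ?thesis by (auto simp: c3_def e_def L3_nonneg intro!: mult_nonneg_nonneg)
  qed
  have pos1: "c3 1 * L3 1 * (x * L3 1 - 5/4) * e 1 > 0"
  proof -
    have "x * pi \<ge> 1 * pi" using x by (intro mult_right_mono) auto
    moreover have "x * L3 1 = x * pi" by (simp add: L3_def)
    ultimately have "x * L3 1 - 5/4 > 0" using pi_gt3 by linarith
    thus ?thesis by (simp add: c3_def L3_def e_def)
  qed
  have "0 < (\<Sum>n. c3 n * L3 n * (x * L3 n - 5/4) * e n)"
    using s unfolding eq by (intro suminf_pos2[OF sums_summable[OF s[unfolded eq]] nn pos1])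
  also have "(\<Sum>n. c3 n * L3 n * (x * L3 n - 5/4) * e n) = 5/4 * T3d x + x * T3dd x"
    using s unfolding eq by (rule sums_unique[symmetric])
  finally show ?thesis .
qed

definition R3 where "R3 x = sqrt x * T3 x ^ 2"

lemma R3_prod: "x > 0 \<Longrightarrow> R3 x = T3 x * T3 (1/x)"
  using trans3[of x] by (simp add: R3_def power2_eq_square field_simps)

lemma R3_sym: "x > 0 \<Longrightarrow> R3 (1/x) = R3 x"
  using R3_prod[of x] R3_prod[of "1/x"] by simp

lemma R3_deriv:
  assumes x: "x > 0"
  shows "(R3 has_real_derivative (2 * T3 x / sqrt x) * (T3 x / 4 + x * T3d x)) (at x)"
proof -
  have "(R3 has_real_derivative (inverse (sqrt x) / 2 * T3 x ^ 2 + sqrt x * (2 * T3 x * T3d x))) (at x)"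
    unfolding R3_def[abs_def] using x
    by (auto intro!: derivative_eq_intros T3_deriv simp: power2_eq_square)
  moreover have "inverse (sqrt x) / 2 * T3 x ^ 2 + sqrt x * (2 * T3 x * T3d x) = (2 * T3 x / sqrt x) * (T3 x / 4 + x * T3d x)"
    using x by (simp add: field_simps power2_eq_square)
  ultimately show ?thesis by simp
qed

lemma V3_at_1: "T3 1 / 4 + 1 * T3d 1 = 0"
proof -
  have "(2 * T3 1 / sqrt 1) * (T3 1 / 4 + 1 * T3d 1) = 0"
    by (rule sym_deriv_zero[OF R3_deriv]) (auto simp: R3_sym)
  thus ?thesis using T3_pos[of 1] by simp
qed

lemma V3_pos:
  assumes x: "x > 1"
  shows "T3 x / 4 + x * T3d x > 0"
proof -
  have "T3 1 / 4 + 1 * T3d 1 < T3 x / 4 + x * T3d x"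
  proof (rule DERIV_pos_imp_increasing[OF x])
    fix t :: real assume t: "1 \<le> t" "t \<le> x"
    have "((\<lambda>t. T3 t / 4 + t * T3d t) has_real_derivative (T3d t / 4 + (1 * T3d t + t * T3dd t))) (at t)"
      using t by (auto intro!: derivative_eq_intros T3_deriv T3d_deriv)
    moreover have "T3d t / 4 + (1 * T3d t + t * T3dd t) = 5/4 * T3d t + t * T3dd t" by simp
    ultimately show "\<exists>y. ((\<lambda>t. T3 t / 4 + t * T3d t) has_real_derivative y) (at t) \<and> y > 0"
      using V3_deriv_pos[OF t(1)] by auto
  qed
  thus ?thesis using V3_at_1 by simp
qed

lemma R3_gt1:
  assumes x: "x > 1"
  shows "R3 x > R3 1"
proof (rule DERIV_pos_imp_increasing_open[OF x])
  fix t :: real assume t: "1 < t" "t < x"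
  show "\<exists>y. (R3 has_real_derivative y) (at t) \<and> y > 0"
    using R3_deriv[of t] t V3_pos[of t] T3_pos[of t]
    by (intro exI[of _ "(2 * T3 t / sqrt t) * (T3 t / 4 + t * T3d t)"] conjI) (auto intro!: mult_pos_pos divide_pos_pos)
next
  show "continuous_on {1..x} R3"
  proof (intro continuous_at_imp_continuous_on ballI)
    fix t assume "t \<in> {1..x}"
    hence "t > 0" by auto
    thus "isCont R3 t" using R3_deriv[of t] DERIV_isCont by blast
  qed
qed

lemma R3_min:
  assumes x: "x > 0"
  shows "R3 x \<ge> R3 1" and "R3 x = R3 1 \<longleftrightarrow> x = 1"
proof -
  have "x \<noteq> 1 \<Longrightarrow> R3 x > R3 1"
  proof -
    assume "x \<noteq> 1"
    show "R3 x > R3 1"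
    proof (cases "x > 1")
      case True then show ?thesis by (rule R3_gt1)
    next
      case False
      hence "1/x > 1" using x \<open>x \<noteq> 1\<close> by (simp add: field_simps)
      thus ?thesis using R3_gt1[of "1/x"] R3_sym[OF x] by simp
    qed
  qed
  thus "R3 x \<ge> R3 1" "R3 x = R3 1 \<longleftrightarrow> x = 1" by force+
qed


lemma sq_le_4pow: "real m ^ 2 \<le> 4 ^ m"
proof -
  have "m < 2 ^ m" by simp
  hence "real m \<le> 2 ^ m" by (metis less_imp_le of_nat_le_iff of_nat_numeral of_nat_power)
  hence "real m ^ 2 \<le> (2 ^ m) ^ 2" by (intro power_mono) auto
  also have "(2 ^ m) ^ 2 = ((2::real) ^ 2) ^ m" by (simp only: power_mult[symmetric] mult.commute)
  also have "\<dots> = 4 ^ m" by simp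
  finally show ?thesis .
qed

lemma geo_tail2:
  fixes r :: real
  assumes "0 \<le> r" "r < 1"
  shows "(\<lambda>n. if n < 2 then 0 else r ^ n) sums (r^2 / (1 - r))"
proof -
  have "(\<lambda>i. r^2 * r^i) sums (r^2 * (1 / (1 - r)))" using sums_mult[OF geometric_sums[of r], of "r^2"] assms by simp
  hence "(\<lambda>i. (\<lambda>n. if n < 2 then 0 else r ^ n) (i + 2)) sums (r^2 / (1 - r))"
    by (simp add: power_add power2_eq_square mult_ac)
  thus ?thesis by (subst (asm) sums_iff_shift) simp
qed

lemma geo_tail1:
  fixes r :: real
  assumes "0 \<le> r" "r < 1"
  shows "(\<lambda>n. if n < 1 then 0 else r ^ n) sums (r / (1 - r))"
proof -
  have "(\<lambda>i. r * r^i) sums (r * (1 / (1 - r)))" using sums_mult[OF geometric_sums[of r], of "r"] assms by simp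
  hence "(\<lambda>i. (\<lambda>n. if n < 1 then 0 else r ^ n) (i + 1)) sums (r / (1 - r))"
    by (simp add: mult.commute)
  thus ?thesis by (subst (asm) sums_iff_shift) simp
qed

lemma q_bounds:
  assumes x: "x \<ge> 1"
  shows "exp (-(pi*x)) > 0" "exp (-(pi*x)) \<le> 1/20"
proof -
  show "exp (-(pi*x)) > 0" by simp
  have "pi * 1 \<le> pi * x" using x by (intro mult_left_mono) auto
  hence "exp (-(pi*x)) \<le> exp (-pi)" by simp
  thus "exp (-(pi*x)) \<le> 1/20" using exp_pi_bound by linarith
qed

definition T4d where "T4d = ES (\<lambda>n. - L3 n * c4 n) L3"
definition T4dd where "T4dd = ES (\<lambda>n. - L3 n * (- L3 n * c4 n)) L3"

lemma T4_deriv: "x > 0 \<Longrightarrow> (T4 has_real_derivative T4d x) (at x)"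
  unfolding T4_def T4d_def by (rule ES_deriv[OF sx_c4 lok_L3])
lemma T4d_deriv: "x > 0 \<Longrightarrow> (T4d has_real_derivative T4dd x) (at x)"
  unfolding T4dd_def T4d_def by (rule ES_deriv[OF sx_L3_mult[OF sx_c4] lok_L3])

lemma T4dd_nonpos:
  assumes x: "x \<ge> 1"
  shows "T4dd x \<le> 0"
proof -
  define q where "q = exp (-(pi*x))"
  have q0: "q > 0" and q1: "q \<le> 1/20" using q_bounds[OF x] by (auto simp: q_def)
  define r where "r = 16 * q^2"
  have r0: "r \<ge> 0" by (simp add: r_def)
  have "q^2 \<le> (1/20)^2" using q0 q1 by (intro power_mono) auto
  hence r1: "r \<le> 1/25" by (simp add: r_def power_divide)
  define t where "t (n::nat) = - L3 n * (- L3 n * c4 n) * exp (-(L3 n * x))" for n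
  define a where "a (n::nat) = (if n = 1 then - 2 * pi^2 * q else 0)" for n
  define f where "f (n::nat) = 2 * pi^2 * (if n < 2 then 0 else r ^ n)" for n
  have st: "summable t" unfolding t_def using ES_summable(2)[OF sx_L3_mult[OF sx_L3_mult[OF sx_c4]] lok_L3] x by simp
  have sa: "a sums (- 2 * pi^2 * q)" unfolding a_def using sums_single[of 1 "\<lambda>_. - 2 * pi^2 * q"] by simp
  have sf: "f sums (2 * pi^2 * (r^2 / (1 - r)))" unfolding f_def using geo_tail2[OF r0] r1 by (intro sums_mult) auto
  have tq: "t n = pi^2 * real n ^ 4 * c4 n * q ^ (n*n)" for n
  proof -
    have "exp (-(L3 n * x)) = q ^ (n*n)" unfolding q_def using exp_pow_L3[of x n] by simp
    thus ?thesis by (simp add: t_def L3_def power2_eq_square power4_eq_xxxx)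
  qed
  have le: "t n \<le> a n + f n" for n
  proof (cases "n < 2")
    case True
    hence "n = 0 \<or> n = 1" by auto
    then show ?thesis by (auto simp: tq a_def f_def c4_def)
  next
    case False
    have "real n ^ 4 * q ^ (n*n) \<le> 4 ^ (n*n) * q ^ (n*n)"
    proof -
      have "real n ^ 4 = real (n*n) ^ 2" by (simp add: power4_eq_xxxx power2_eq_square)
      thus ?thesis using sq_le_4pow[of "n*n"] q0 by (intro mult_right_mono) auto
    qed
    also have "\<dots> = (4*q) ^ (n*n)" by (simp add: power_mult_distrib)
    also have "\<dots> \<le> (4*q) ^ (2*n)" using False q0 q1 by (intro power_decreasing) (auto simp: mult_le_cancel_right1)
    also have "\<dots> = r ^ n" by (simp add: r_def power_mult power_mult_distrib)
    finally have b: "real n ^ 4 * q ^ (n*n) \<le> r ^ n" .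
    have "t n \<le> pi^2 * (real n ^ 4 * q ^ (n*n)) * 2"
    proof -
      have "\<bar>(-1::real)^n\<bar> = 1" by (simp add: power_abs)
      hence "(-1::real)^n \<le> 1" by linarith
      hence "c4 n \<le> 2" by (auto simp: c4_def)
      moreover have "pi^2 * (real n ^ 4 * q ^ (n*n)) \<ge> 0" using q0 by simp
      ultimately have "pi^2 * (real n ^ 4 * q ^ (n*n)) * c4 n \<le> pi^2 * (real n ^ 4 * q ^ (n*n)) * 2"
        by (intro mult_left_mono) auto
      thus ?thesis by (simp add: tq mult_ac)
    qed
    also have "\<dots> \<le> pi^2 * r^n * 2" using b by (intro mult_right_mono mult_left_mono) auto
    finally show ?thesis using False by (simp add: a_def f_def mult_ac)
  qed
  have "T4dd x = suminf t" by (simp add: T4dd_def ES_def t_def[abs_def])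
  also have "\<dots> \<le> (\<Sum>n. a n + f n)" using le st sa sf by (intro suminf_le) (auto intro: summable_add sums_summable)
  also have "\<dots> = - 2 * pi^2 * q + 2 * pi^2 * (r^2 / (1 - r))" using sums_add[OF sa sf] by (simp add: sums_iff)
  also have "\<dots> \<le> 0"
  proof -
    have "q^2 \<le> (1/20)^2" using q0 q1 by (intro power_mono) auto
    have "r^2 / (1 - r) \<le> q"
    proof -
      have "r^2 = 256 * q^4" by (simp add: r_def power_mult_distrib power2_eq_square power4_eq_xxxx)
      also have "\<dots> = q * (256 * q^3)" by (simp add: power3_eq_cube power4_eq_xxxx)
      also have "\<dots> \<le> q * (1 - r)"
      proof -
        have "q^3 \<le> (1/20)^3" using q0 q1 by (intro power_mono) auto
        hence "256 * q^3 \<le> 1 - r" using r1 by (simp add: power_divide)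
        thus ?thesis using q0 by (intro mult_left_mono) auto
      qed
      finally show ?thesis using r1 by (simp add: divide_le_eq)
    qed
    hence "2 * pi^2 * (r^2 / (1 - r)) \<le> 2 * pi^2 * q" by (intro mult_left_mono) auto
    thus ?thesis by simp
  qed
  finally show ?thesis .
qed


definition Lu :: "nat \<Rightarrow> real" where "Lu n = pi * (real n * (real n + 1))"
definition cU :: "nat \<Rightarrow> real" where "cU n = 1"
definition U where "U = ES cU Lu"
definition Ud where "Ud = ES (\<lambda>n. - Lu n * cU n) Lu"
definition Udd where "Udd = ES (\<lambda>n. - Lu n * (- Lu n * cU n)) Lu"

lemma Lu_nonneg: "Lu n \<ge> 0" by (simp add: Lu_def)

lemma lok_Lu: "lok Lu pi"
  unfolding lok_def Lu_def
proof
  fix n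
  have "real n \<le> 1 * (real n * (real n + 1))" by (cases n) (auto simp: algebra_simps)
  also have "\<dots> \<le> pi * (real n * (real n + 1))" by (intro mult_right_mono) (auto simp: pi_ge_one)
  finally show "real n \<le> pi * (real n * (real n + 1)) \<and> pi * (real n * (real n + 1)) \<le> pi * (real n + 1)\<^sup>2"
    by (auto intro!: mult_left_mono simp: power2_eq_square)
qed

lemma sx_cU: "sx cU" by (rule sx_bounded[of _ 1]) (simp add: cU_def)
lemma sx_Lu_mult: "sx c \<Longrightarrow> sx (\<lambda>n. - Lu n * c n)"
  by (rule sx_mult) (use lok_abs[OF lok_Lu] in auto)

lemma U_deriv: "x > 0 \<Longrightarrow> (U has_real_derivative Ud x) (at x)"
  unfolding U_def Ud_def by (rule ES_deriv[OF sx_cU lok_Lu])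
lemma Ud_deriv: "x > 0 \<Longrightarrow> (Ud has_real_derivative Udd x) (at x)"
  unfolding Udd_def Ud_def by (rule ES_deriv[OF sx_Lu_mult[OF sx_cU] lok_Lu])

lemma U_ge1: "x > 0 \<Longrightarrow> U x \<ge> 1"
proof -
  assume x: "x > 0"
  have "sum (\<lambda>n. cU n * exp (-(Lu n * x))) {0} \<le> (\<Sum>n. cU n * exp (-(Lu n * x)))"
    by (rule sum_le_suminf[OF ES_summable(2)[OF sx_cU lok_Lu x]]) (auto simp: cU_def)
  thus ?thesis by (simp add: U_def ES_def cU_def Lu_def)
qed

lemma T2_U: "x > 0 \<Longrightarrow> T2 x = 2 * exp (-(pi*x/4)) * U x"
proof -
  assume x: "x > 0"
  have "T2 x = (\<Sum>n. (2 * exp (-(pi*x/4))) * (cU n * exp (-(Lu n * x))))"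
    unfolding T2_def ES_def
  proof (intro suminf_cong)
    fix n
    have "L2 n * x = pi*x/4 + Lu n * x" by (simp add: L2_def Lu_def power2_eq_square algebra_simps)
    hence "exp (-(L2 n * x)) = exp (-(pi*x/4)) * exp (-(Lu n * x))" by (simp add: exp_add[symmetric])
    thus "c2 n * exp (-(L2 n * x)) = (2 * exp (-(pi*x/4))) * (cU n * exp (-(Lu n * x)))"
      by (simp add: c2_def cU_def)
  qed
  also have "\<dots> = 2 * exp (-(pi*x/4)) * U x"
    unfolding U_def ES_def by (rule suminf_mult[OF ES_summable(2)[OF sx_cU lok_Lu x]])
  finally show ?thesis .
qed

lemma sq_exp_le:
  fixes x c :: real
  assumes x: "x \<ge> 1" and c: "c \<ge> 2"
  shows "x^2 * exp (-(c*x)) \<le> exp (-c)"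
proof -
  have "x \<le> exp (x - 1)" using exp_ge_add_one_self[of "x - 1"] by simp
  hence "x^2 \<le> exp (x - 1) ^ 2" using x by (intro power_mono) auto
  also have "\<dots> = exp (2*x - 2)" by (simp add: power2_eq_square exp_add[symmetric])
  finally have "x^2 * exp (-(c*x)) \<le> exp (2*x - 2) * exp (-(c*x))" by (intro mult_right_mono) auto
  also have "\<dots> = exp (2*x - 2 - c*x)" by (simp add: exp_add[symmetric])
  also have "\<dots> \<le> exp (-c)"
  proof -
    have "(c - 2) * (x - 1) \<ge> 0" using x c by auto
    thus ?thesis by (simp add: algebra_simps)
  qed
  finally show ?thesis .
qed

lemma pi_sq_le: "pi^2 \<le> 10"
proof -
  have "pi^2 \<le> 3.1415926535899^2" using pi_approx(2) by (intro power_mono) auto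
  also have "\<dots> \<le> 10" by (simp add: power2_eq_square)
  finally show ?thesis .
qed

lemma Udd_bound:
  assumes x: "x \<ge> 1"
  shows "x^2 * Udd x \<le> 5/12"
proof -
  have x0: "x > 0" using x by simp
  define Q where "Q = exp (-pi)"
  have Q0: "Q > 0" and Q1: "Q \<le> 1/20" using exp_pi_bound by (auto simp: Q_def)
  define r where "r = 16 * Q^2"
  have r0: "r \<ge> 0" by (simp add: r_def)
  have "Q^2 \<le> (1/20)^2" using Q0 Q1 by (intro power_mono) auto
  hence r1: "r \<le> 1/25" by (simp add: r_def power_divide)
  define t where "t (n::nat) = x^2 * (- Lu n * (- Lu n * cU n) * exp (-(Lu n * x)))" for n
  define f where "f (n::nat) = pi^2 * (if n < 1 then 0 else r ^ n)" for n
  have st: "summable t" unfolding t_def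
    using ES_summable(2)[OF sx_Lu_mult[OF sx_Lu_mult[OF sx_cU]] lok_Lu x0] by (intro summable_mult)
  have sf: "f sums (pi^2 * (r / (1 - r)))" unfolding f_def using geo_tail1[OF r0] r1 by (intro sums_mult) auto
  have le: "t n \<le> f n" for n
  proof (cases "n < 1")
    case True then show ?thesis by (simp add: t_def f_def Lu_def)
  next
    case False
    define m where "m = n * (n + 1)"
    have Lum: "Lu n = pi * real m" by (simp add: Lu_def m_def algebra_simps)
    have m2: "real m \<ge> 2"
    proof -
      have n1: "real n \<ge> 1" using False by simp
      have "real n * real n \<ge> 1 * 1" using n1 by (intro mult_mono) auto
      thus ?thesis using n1 by (simp add: m_def algebra_simps)
    qed
    have "t n = Lu n^2 * (x^2 * exp (-(Lu n * x)))" by (simp add: t_def cU_def power2_eq_square mult_ac)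
    also have "\<dots> \<le> Lu n^2 * exp (-(Lu n))"
    proof -
      have "Lu n \<ge> 2" using m2 pi_ge_one Lum by (smt (verit) mult_le_cancel_right1 mult_nonneg_nonneg)
      hence "x^2 * exp (-(Lu n * x)) \<le> exp (-(Lu n))" using sq_exp_le[OF x, of "Lu n"] by (simp add: mult_ac)
      thus ?thesis by (intro mult_left_mono) auto
    qed
    also have "\<dots> = pi^2 * (real m ^ 2 * Q ^ m)"
    proof -
      have "exp (-(Lu n)) = Q ^ m" unfolding Q_def Lum using exp_of_nat_mult[of m "-pi"] by (simp add: mult_ac)
      thus ?thesis by (simp add: Lum power_mult_distrib)
    qed
    also have "\<dots> \<le> pi^2 * (4 ^ m * Q ^ m)" using sq_le_4pow[of m] Q0 by (intro mult_left_mono mult_right_mono) auto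
    also have "\<dots> = pi^2 * (4 * Q) ^ m" by (simp add: power_mult_distrib)
    also have "\<dots> \<le> pi^2 * (4 * Q) ^ (2 * n)"
    proof -
      have "2 * n \<le> m" using False by (simp add: m_def)
      thus ?thesis using Q0 Q1 by (intro mult_left_mono power_decreasing) auto
    qed
    also have "\<dots> = f n" using False by (simp add: f_def r_def power_mult power_mult_distrib)
    finally show ?thesis .
  qed
  have "x^2 * Udd x = suminf t"
    unfolding Udd_def ES_def t_def
    using ES_summable(2)[OF sx_Lu_mult[OF sx_Lu_mult[OF sx_cU]] lok_Lu x0] by (rule suminf_mult[symmetric])
  also have "\<dots> \<le> pi^2 * (r / (1 - r))" using suminf_le[OF le st sums_summable[OF sf]] sf by (simp add: sums_iff)
  also have "\<dots> \<le> 10 * (1/24)"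
  proof (intro mult_mono pi_sq_le)
    show "r / (1 - r) \<le> 1/24" using r1 by (simp add: divide_le_eq)
  qed (use r0 r1 in auto)
  finally show ?thesis by simp
qed

lemma Udd_nonneg: "x > 0 \<Longrightarrow> Udd x \<ge> 0"
  unfolding Udd_def ES_def
  by (rule suminf_nonneg[OF ES_summable(2)[OF sx_Lu_mult[OF sx_Lu_mult[OF sx_cU]] lok_Lu]]) (auto simp: cU_def)


lemma T2_pos: "x > 0 \<Longrightarrow> T2 x > 0"
  using T2_U[of x] U_ge1[of x] by simp

lemma T4_pos: "x > 0 \<Longrightarrow> T4 x > 0"
proof -
  assume x: "x > 0"
  have "T2 (1/x) = T4 (1/(1/x)) / sqrt (1/x)" using trans2[of "1/x"] x by simp
  hence "T4 x = T2 (1/x) * sqrt (1/x)" using x by (simp add: field_simps)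
  thus ?thesis using T2_pos[of "1/x"] x by simp
qed

definition Q4 where "Q4 x = T4 x * T4 (1/x)"

lemma Q4_form: "x > 0 \<Longrightarrow> Q4 x = 2 * sqrt x * exp (-(pi*x/4)) * T4 x * U x"
proof -
  assume x: "x > 0"
  have "T4 (1/x) = sqrt x * T2 x" using trans2[OF x] x by (simp add: field_simps)
  thus ?thesis using T2_U[OF x] by (simp add: Q4_def mult_ac)
qed

lemma Q4_sym: "x > 0 \<Longrightarrow> Q4 (1/x) = Q4 x" by (simp add: Q4_def mult.commute)

definition G4 where "G4 x = ln 2 + ln x / 2 - pi*x/4 + ln (T4 x) + ln (U x)"

lemma G4_eq: "x > 0 \<Longrightarrow> G4 x = ln (Q4 x)"
proof -
  assume x: "x > 0"
  have T: "T4 x > 0" "U x > 0" using T4_pos[OF x] U_ge1[OF x] by auto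
  have "ln (Q4 x) = ln 2 + ln (sqrt x) + ln (exp (-(pi*x/4))) + ln (T4 x) + ln (U x)"
    unfolding Q4_form[OF x] using x T by (simp add: ln_mult)
  thus ?thesis by (simp add: G4_def ln_sqrt[OF less_imp_le[OF x]])
qed

lemma G4_sym: "x > 0 \<Longrightarrow> G4 (1/x) = G4 x"
  using G4_eq[of x] G4_eq[of "1/x"] Q4_sym[of x] by simp

definition g1 where "g1 x = 1/(2*x) - pi/4 + T4d x / T4 x + Ud x / U x"
definition g2 where "g2 x = -1/(2*x^2) + (T4dd x * T4 x - T4d x ^ 2) / T4 x ^ 2 + (Udd x * U x - Ud x ^ 2) / U x ^ 2"

lemma G4_deriv: "x > 0 \<Longrightarrow> (G4 has_real_derivative g1 x) (at x)"
proof -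
  assume x: "x > 0"
  have T: "T4 x > 0" "U x > 0" using T4_pos[OF x] U_ge1[OF x] by auto
  have "(G4 has_real_derivative (inverse x / 2 - pi/4 + T4d x / T4 x + Ud x / U x)) (at x)"
    unfolding G4_def[abs_def] using x T
    by (auto intro!: derivative_eq_intros T4_deriv U_deriv simp: field_simps)
  thus ?thesis by (simp add: g1_def field_simps)
qed

lemma g1_deriv: "x > 0 \<Longrightarrow> (g1 has_real_derivative g2 x) (at x)"
proof -
  assume x: "x > 0"
  have T: "T4 x > 0" "U x > 0" using T4_pos[OF x] U_ge1[OF x] by auto
  have "(g1 has_real_derivative (- (2 / (2*x)^2) + (T4dd x * T4 x - T4d x * T4d x) / (T4 x * T4 x) + (Udd x * U x - Ud x * Ud x) / (U x * U x))) (at x)"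
    unfolding g1_def[abs_def] using x T
    by (auto intro!: derivative_eq_intros T4_deriv U_deriv T4d_deriv Ud_deriv simp: field_simps power2_eq_square)
  moreover have "- (2 / (2*x)^2) = -1/(2*x^2)" using x by (simp add: field_simps power2_eq_square)
  ultimately show ?thesis by (simp add: g2_def power2_eq_square)
qed

lemma g2_neg:
  assumes x: "x \<ge> 1"
  shows "g2 x < 0"
proof -
  have x0: "x > 0" using x by simp
  have T: "T4 x > 0" "U x \<ge> 1" using T4_pos[OF x0] U_ge1[OF x0] by auto
  have a: "(T4dd x * T4 x - T4d x ^ 2) / T4 x ^ 2 \<le> 0"
  proof -
    have "T4dd x * T4 x \<le> 0" using T4dd_nonpos[OF x] T by (simp add: mult_nonpos_nonneg)
    hence "T4dd x * T4 x - T4d x ^ 2 \<le> 0" by (smt (verit) zero_le_power2)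
    thus ?thesis by (intro divide_nonpos_nonneg) auto
  qed
  have b: "(Udd x * U x - Ud x ^ 2) / U x ^ 2 \<le> Udd x"
  proof -
    have "(Udd x * U x - Ud x ^ 2) / U x ^ 2 \<le> (Udd x * U x) / U x ^ 2"
      using T by (intro divide_right_mono) auto
    also have "\<dots> = Udd x / U x" using T by (simp add: power2_eq_square)
    also have "\<dots> \<le> Udd x" using T Udd_nonneg[OF x0] by (simp add: divide_le_eq mult_le_cancel_left1)
    finally show ?thesis .
  qed
  have c: "Udd x < 1/(2*x^2)"
  proof -
    have "x^2 * Udd x \<le> 5/12" by (rule Udd_bound[OF x])
    hence "Udd x \<le> 5/12 / x^2" using x0 by (simp add: field_simps)
    also have "\<dots> < 1/(2*x^2)" using x0 by (simp add: field_simps)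
    finally show ?thesis .
  qed
  show ?thesis unfolding g2_def using a b c by linarith
qed

lemma g1_at1: "g1 1 = 0"
  by (rule sym_deriv_zero[OF G4_deriv]) (auto simp: G4_sym)

lemma g1_neg: "x > 1 \<Longrightarrow> g1 x < 0"
proof -
  assume x: "x > 1"
  have "g1 1 > g1 x"
  proof (rule DERIV_neg_imp_decreasing[OF x])
    fix t :: real assume "1 \<le> t" "t \<le> x"
    thus "\<exists>y. (g1 has_real_derivative y) (at t) \<and> y < 0"
      using g1_deriv[of t] g2_neg[of t] by (intro exI[of _ "g2 t"]) auto
  qed
  thus ?thesis using g1_at1 by simp
qed

lemma G4_lt: "x > 1 \<Longrightarrow> G4 x < G4 1"
proof -
  assume x: "x > 1"
  show "G4 x < G4 1"
  proof (rule DERIV_neg_imp_decreasing_open[OF x])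
    fix t :: real assume "1 < t" "t < x"
    thus "\<exists>y. (G4 has_real_derivative y) (at t) \<and> y < 0"
      using G4_deriv[of t] g1_neg[of t] by (intro exI[of _ "g1 t"]) auto
  next
    show "continuous_on {1..x} G4"
    proof (intro continuous_at_imp_continuous_on ballI)
      fix t assume "t \<in> {1..x}"
      hence "t > 0" by auto
      thus "isCont G4 t" using G4_deriv[of t] DERIV_isCont by blast
    qed
  qed
qed

lemma Q4_max:
  assumes x: "x > 0"
  shows "Q4 x \<le> Q4 1" and "Q4 x = Q4 1 \<longleftrightarrow> x = 1"
proof -
  have pos: "Q4 y > 0" if "y > 0" for y using T4_pos that by (simp add: Q4_def)
  have lt: "Q4 y < Q4 1" if "y > 1" for y
  proof -
    have "ln (Q4 y) < ln (Q4 1)" using G4_lt[OF that] G4_eq[of y] G4_eq[of 1] that by simp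
    thus ?thesis using pos[of y] pos[of 1] that by simp
  qed
  have "x \<noteq> 1 \<Longrightarrow> Q4 x < Q4 1"
  proof -
    assume "x \<noteq> 1"
    show "Q4 x < Q4 1"
    proof (cases "x > 1")
      case True then show ?thesis by (rule lt)
    next
      case False
      hence "1/x > 1" using x \<open>x \<noteq> 1\<close> by (simp add: field_simps)
      thus ?thesis using lt[of "1/x"] Q4_sym[OF x] by simp
    qed
  qed
  thus "Q4 x \<le> Q4 1" "Q4 x = Q4 1 \<longleftrightarrow> x = 1" by force+
qed


definition ha :: "nat \<Rightarrow> real" where "ha n = (pochhammer (1/2) n / fact n)^2"

lemma hyp_F: "hyp2F1 (1/2) (1/2) 1 t = (\<Sum>n. ha n * t^n)"
  unfolding hyp2F1_def
proof (intro suminf_cong)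
  fix n
  show "pochhammer (1/2) n * pochhammer (1/2) n / pochhammer 1 n * t ^ n / fact n = ha n * t ^ n"
    by (simp add: ha_def pochhammer_fact[symmetric] power2_eq_square field_simps)
qed

lemma ha_Suc: "ha (Suc n) = ha n * ((real n + 1/2) / (real n + 1))^2"
  by (simp add: ha_def pochhammer_Suc power2_eq_square field_simps)

lemma ha_pos: "ha n > 0"
proof -
  have "pochhammer (1/2::real) n > 0" by (rule pochhammer_pos) simp
  thus ?thesis by (simp add: ha_def)
qed

lemma ha_le1: "ha n \<le> 1"
proof (induction n)
  case 0 then show ?case by (simp add: ha_def)
next
  case (Suc n)
  have "((real n + 1/2) / (real n + 1))^2 \<le> 1" by (simp add: power_le_one divide_le_eq)
  hence "ha n * ((real n + 1/2) / (real n + 1))^2 \<le> ha n * 1"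
    using ha_pos[of n] by (intro mult_left_mono) auto
  thus ?case using Suc by (simp add: ha_Suc)
qed

lemma ha_0: "ha 0 = 1" by (simp add: ha_def)
lemma ha_1: "ha 1 = 1/4" by (simp add: ha_def power2_eq_square)

lemma sx_powser:
  assumes c: "sx c" and z: "\<bar>z\<bar> < 1"
  shows "summable (\<lambda>n. c n * z^n)"
proof (cases "z = 0")
  case True then show ?thesis by simp
next
  case False
  define x where "x = - ln \<bar>z\<bar>"
  have x: "x > 0" using False z by (simp add: x_def)
  have e: "exp (-(x * real n)) = \<bar>z\<bar> ^ n" for n
    using False by (simp add: x_def exp_of_nat_mult[symmetric] mult_ac exp_minus)
      (metis exp_ln exp_of_nat_mult mult.commute zero_less_abs_iff False)
  have "summable (\<lambda>n. \<bar>c n\<bar> * exp (-(x * real n)))" using c x unfolding sx_def by auto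
  hence "summable (\<lambda>n. \<bar>c n * z^n\<bar>)" by (simp add: e abs_mult power_abs)
  thus ?thesis by (rule summable_rabs_cancel)
qed

lemma sx_shift: "sx c \<Longrightarrow> sx (\<lambda>n. c (Suc n))"
proof -
  assume c: "sx c"
  show "sx (\<lambda>n. c (Suc n))" unfolding sx_def
  proof (intro allI impI)
    fix x :: real assume x: "x > 0"
    have "summable (\<lambda>n. \<bar>c n\<bar> * exp (-(x * real n)))" using c x unfolding sx_def by auto
    hence "summable (\<lambda>n. \<bar>c (Suc n)\<bar> * exp (-(x * real (Suc n))))"
      using summable_Suc_iff[where f="\<lambda>n. \<bar>c n\<bar> * exp (-(x * real n))"] by simp
    hence sm: "summable (\<lambda>n. exp x * (\<bar>c (Suc n)\<bar> * exp (-(x * real (Suc n)))))" by (rule summable_mult)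
    have eq: "exp x * (\<bar>c (Suc n)\<bar> * exp (-(x * real (Suc n)))) = \<bar>c (Suc n)\<bar> * exp (-(x * real n))" for n
    proof -
      have "exp x * exp (-(x * real (Suc n))) = exp (x + -(x * real (Suc n)))" by (rule exp_add[symmetric])
      also have "x + -(x * real (Suc n)) = -(x * real n)" by (simp add: algebra_simps)
      finally show ?thesis by (metis mult.left_commute)
    qed
    have "(\<lambda>n. exp x * (\<bar>c (Suc n)\<bar> * exp (-(x * real (Suc n))))) = (\<lambda>n. \<bar>c (Suc n)\<bar> * exp (-(x * real n)))"
      by (rule ext) (rule eq)
    thus "summable (\<lambda>n. \<bar>c (Suc n)\<bar> * exp (-(x * real n)))" using sm by metis
  qed
qed

lemma sx_ha: "sx ha" by (rule sx_bounded[of _ 1]) (use ha_le1 ha_pos in \<open>auto simp: abs_of_pos\<close>)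

lemma n1_le_sq: "real n + 1 \<le> (real n + 1)^2"
proof -
  have "(real n + 1) * 1 \<le> (real n + 1) * (real n + 1)" by (intro mult_left_mono) auto
  thus ?thesis by (simp add: power2_eq_square)
qed

lemma n1_le_sq': "1 + real n \<le> (real n + 1)^2" by (metis add.commute n1_le_sq)

lemma sx_dha: "sx (diffs ha)"
  unfolding diffs_def by (rule sx_mult[OF sx_shift[OF sx_ha], of _ 1]) (use n1_le_sq' in auto)

lemma sx_ddha: "sx (diffs (diffs ha))"
proof -
  have "sx (\<lambda>n. (real (Suc n) * real (Suc (Suc n))) * ha (Suc (Suc n)))"
  proof (rule sx_mult[OF sx_shift[OF sx_shift[OF sx_ha]], of _ 2])
    fix n
    have "real (Suc n) * real (Suc (Suc n)) \<le> 2 * (real n + 1)^2" by (simp add: power2_eq_square algebra_simps)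
    thus "\<bar>real (Suc n) * real (Suc (Suc n))\<bar> \<le> 2 * (real n + 1)^2" by simp
  qed
  thus ?thesis by (simp add: diffs_def mult.assoc)
qed

definition F where "F t = (\<Sum>n. ha n * t^n)"
definition Fd where "Fd t = (\<Sum>n. diffs ha n * t^n)"
definition Fdd where "Fdd t = (\<Sum>n. diffs (diffs ha) n * t^n)"

lemma F_deriv: "\<bar>t\<bar> < 1 \<Longrightarrow> (F has_real_derivative Fd t) (at t)"
  unfolding F_def[abs_def] Fd_def by (rule termdiffs_strong'[of 1]) (auto intro: sx_powser[OF sx_ha])
lemma Fd_deriv: "\<bar>t\<bar> < 1 \<Longrightarrow> (Fd has_real_derivative Fdd t) (at t)"
  unfolding Fd_def[abs_def] Fdd_def by (rule termdiffs_strong'[of 1]) (auto intro: sx_powser[OF sx_dha])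


definition gq :: "nat \<Rightarrow> real" where "gq n = (real n * real (Suc n)) * ha (Suc n)"
definition hq :: "nat \<Rightarrow> real" where "hq n = (real n * (real n - 1)) * ha n"
definition kq :: "nat \<Rightarrow> real" where "kq n = real n * ha n"

lemma sx_gq: "sx gq"
  unfolding gq_def
proof (rule sx_mult[OF sx_shift[OF sx_ha], of _ 1])
  fix n
  have "real n * real (Suc n) \<le> (real n + 1)^2" by (simp add: power2_eq_square algebra_simps)
  thus "\<bar>real n * real (Suc n)\<bar> \<le> 1 * (real n + 1)^2" by simp
qed

lemma sx_hq: "sx hq"
  unfolding hq_def
proof (rule sx_mult[OF sx_ha, of _ 1])
  fix n
  have "\<bar>real n * (real n - 1)\<bar> \<le> real n * (real n + 1)"
    by (cases n) (auto simp: abs_mult algebra_simps)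
  also have "\<dots> \<le> (real n + 1)^2" by (simp add: power2_eq_square algebra_simps)
  finally show "\<bar>real n * (real n - 1)\<bar> \<le> 1 * (real n + 1)^2" by simp
qed

lemma sx_kq: "sx kq"
  unfolding kq_def
proof (rule sx_mult[OF sx_ha, of _ 1])
  fix n
  show "\<bar>real n\<bar> \<le> 1 * (real n + 1)^2" using n1_le_sq[of n] by simp
qed

lemma I1: "\<bar>t\<bar> < 1 \<Longrightarrow> (\<Sum>n. gq n * t^n) = t * Fdd t"
proof -
  assume t: "\<bar>t\<bar> < 1"
  have "(\<Sum>n. gq n * t^n) = gq 0 + (\<Sum>n. gq (Suc n) * t^n) * t"
    by (rule powser_split_head(1)[OF sx_powser[OF sx_gq t]])
  moreover have "(\<lambda>n. gq (Suc n) * t^n) = (\<lambda>n. diffs (diffs ha) n * t^n)"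
    by (simp add: gq_def diffs_def mult_ac)
  ultimately show ?thesis by (simp add: gq_def Fdd_def mult.commute)
qed

lemma I2: "\<bar>t\<bar> < 1 \<Longrightarrow> (\<Sum>n. hq n * t^n) = t^2 * Fdd t"
proof -
  assume t: "\<bar>t\<bar> < 1"
  have s: "summable (\<lambda>n. hq n * t^n)" by (rule sx_powser[OF sx_hq t])
  have 1: "(\<Sum>n. hq n * t^n) = hq 0 + (\<Sum>n. hq (Suc n) * t^n) * t"
    by (rule powser_split_head(1)[OF s])
  have s1: "summable (\<lambda>n. hq (Suc n) * t^n)" by (rule powser_split_head(3)[OF s])
  have 2: "(\<Sum>n. hq (Suc n) * t^n) = hq (Suc 0) + (\<Sum>n. hq (Suc (Suc n)) * t^n) * t"
    using powser_split_head(1)[OF s1] .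
  have "(\<lambda>n. hq (Suc (Suc n)) * t^n) = (\<lambda>n. diffs (diffs ha) n * t^n)"
    by (simp add: hq_def diffs_def algebra_simps)
  thus ?thesis using 1 2 by (simp add: hq_def Fdd_def power2_eq_square mult_ac)
qed

lemma I3: "\<bar>t\<bar> < 1 \<Longrightarrow> (\<Sum>n. kq n * t^n) = t * Fd t"
proof -
  assume t: "\<bar>t\<bar> < 1"
  have "(\<Sum>n. kq n * t^n) = kq 0 + (\<Sum>n. kq (Suc n) * t^n) * t"
    by (rule powser_split_head(1)[OF sx_powser[OF sx_kq t]])
  moreover have "(\<lambda>n. kq (Suc n) * t^n) = (\<lambda>n. diffs ha n * t^n)"
    by (simp add: kq_def diffs_def)
  ultimately show ?thesis by (simp add: kq_def Fd_def mult.commute)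
qed

lemma ha_Suc': "(real n + 1)^2 * ha (Suc n) = (real n + 1/2)^2 * ha n"
  unfolding ha_Suc power_divide by (simp add: field_simps)

lemma coeff_zero: "gq n - hq n + diffs ha n - 2 * kq n - ha n / 4 = 0"
proof -
  have 1: "gq n + diffs ha n = (real n + 1)^2 * ha (Suc n)" by (simp add: gq_def diffs_def power2_eq_square algebra_simps)
  have 2: "hq n + 2*kq n + ha n/4 = (real n + 1/2)^2 * ha n" by (simp add: hq_def kq_def power2_eq_square algebra_simps)
  show ?thesis using 1 2 ha_Suc'[of n] by linarith
qed

lemma ODE:
  assumes t: "\<bar>t\<bar> < 1"
  shows "t * Fdd t - t^2 * Fdd t + Fd t - 2 * t * Fd t - F t / 4 = 0"
proof -
  have s1: "(\<lambda>n. gq n * t^n) sums (t * Fdd t)" using I1[OF t] sx_powser[OF sx_gq t] by (simp add: sums_iff)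
  have s2: "(\<lambda>n. hq n * t^n) sums (t^2 * Fdd t)" using I2[OF t] sx_powser[OF sx_hq t] by (simp add: sums_iff)
  have s3: "(\<lambda>n. diffs ha n * t^n) sums (Fd t)" using sx_powser[OF sx_dha t] by (simp add: sums_iff Fd_def)
  have s4: "(\<lambda>n. kq n * t^n) sums (t * Fd t)" using I3[OF t] sx_powser[OF sx_kq t] by (simp add: sums_iff)
  have s5: "(\<lambda>n. ha n * t^n) sums (F t)" using sx_powser[OF sx_ha t] by (simp add: sums_iff F_def)
  have "(\<lambda>n. gq n * t^n - hq n * t^n + diffs ha n * t^n - 2 * (kq n * t^n) - (ha n * t^n) / 4) sums
        (t * Fdd t - t^2 * Fdd t + Fd t - 2 * (t * Fd t) - F t / 4)"
    by (intro sums_diff sums_add sums_mult sums_divide s1 s2 s3 s4 s5)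
  moreover have "(\<lambda>n. gq n * t^n - hq n * t^n + diffs ha n * t^n - 2 * (kq n * t^n) - (ha n * t^n) / 4) = (\<lambda>n. 0)"
  proof
    fix n
    have "gq n * t^n - hq n * t^n + diffs ha n * t^n - 2 * (kq n * t^n) - (ha n * t^n) / 4
          = (gq n - hq n + diffs ha n - 2 * kq n - ha n / 4) * t^n" by (simp add: algebra_simps)
    thus "gq n * t^n - hq n * t^n + diffs ha n * t^n - 2 * (kq n * t^n) - (ha n * t^n) / 4 = 0"
      by (simp add: coeff_zero)
  qed
  ultimately have "(\<lambda>n. 0::real) sums (t * Fdd t - t^2 * Fdd t + Fd t - 2 * (t * Fd t) - F t / 4)" by simp
  hence "t * Fdd t - t^2 * Fdd t + Fd t - 2 * (t * Fd t) - F t / 4 = 0" using sums_zero sums_unique2 by blast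
  thus ?thesis by simp
qed

definition pc :: "nat \<Rightarrow> real" where "pc n = 2 * diffs ha n - diffs (diffs ha) n + 2 * gq n"

lemma pc_pos: "pc n > 0"
proof -
  define a1 where "a1 = ha (Suc n)"
  define a2 where "a2 = ha (Suc (Suc n))"
  have r: "4*(real n + 2)^2 * a2 = (2*real n + 3)^2 * a1"
  proof -
    have "(real (Suc n) + 1)^2 * a2 = (real (Suc n) + 1/2)^2 * a1" using ha_Suc'[of "Suc n"] by (simp add: a1_def a2_def)
    hence "4 * ((real n + 2)^2 * a2) = 4 * ((real n + 3/2)^2 * a1)" by (simp add: algebra_simps)
    thus ?thesis by (simp add: power2_eq_square algebra_simps)
  qed
  have e: "4 * pc n * (real n + 2) = 8*(real n+1)*(real n+2)*a1 - (real n+1)*(4*(real n+2)^2*a2) + 8*real n*(real n+1)*(real n+2)*a1"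
    unfolding pc_def gq_def diffs_def a1_def a2_def by (simp add: power2_eq_square algebra_simps)
  have e2: "4 * pc n * (real n + 2) = (real n + 1) * a1 * (4 * (real n)^2 + 12 * real n + 7)"
    using e unfolding r by (simp add: power2_eq_square algebra_simps)
  have p: "4 * (real n)^2 + 12 * real n + 7 > 0"
  proof -
    have "4 * (real n)^2 \<ge> 0" "12 * real n \<ge> 0" by auto
    thus ?thesis by linarith
  qed
  have "4 * pc n * (real n + 2) > 0" unfolding e2 using ha_pos[of "Suc n"] p by (intro mult_pos_pos) (auto simp: a1_def)
  thus ?thesis by (simp add: zero_less_mult_iff)
qed

lemma sx_pc: "sx pc"
proof -
  have o: "1 \<le> (real n + 1)^2" for n by (rule one_le_power) simp
  have a: "sx (\<lambda>n. 2 * diffs ha n)" by (rule sx_mult[OF sx_dha, of _ 2]) (use o in simp)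
  have b: "sx (\<lambda>n. 2 * gq n)" by (rule sx_mult[OF sx_gq, of _ 2]) (use o in simp)
  show ?thesis unfolding sx_def pc_def
  proof (intro allI impI)
    fix x :: real assume x: "x > 0"
    have "summable (\<lambda>n. \<bar>2 * diffs ha n\<bar> * exp (-(x * real n)) + \<bar>diffs (diffs ha) n\<bar> * exp (-(x * real n)) + \<bar>2 * gq n\<bar> * exp (-(x * real n)))"
      using a b sx_ddha x unfolding sx_def by (intro summable_add) auto
    thus "summable (\<lambda>n. \<bar>2 * diffs ha n - diffs (diffs ha) n + 2 * gq n\<bar> * exp (-(x * real n)))"
    proof (rule summable_comparison_test'[of _ 0])
      fix n :: nat
      have "\<bar>2 * diffs ha n - diffs (diffs ha) n + 2 * gq n\<bar> \<le> \<bar>2 * diffs ha n\<bar> + \<bar>diffs (diffs ha) n\<bar> + \<bar>2 * gq n\<bar>" by arith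
      hence "\<bar>2 * diffs ha n - diffs (diffs ha) n + 2 * gq n\<bar> * exp (-(x * real n)) \<le> (\<bar>2 * diffs ha n\<bar> + \<bar>diffs (diffs ha) n\<bar> + \<bar>2 * gq n\<bar>) * exp (-(x * real n))"
        by (intro mult_right_mono) auto
      thus "norm (\<bar>2 * diffs ha n - diffs (diffs ha) n + 2 * gq n\<bar> * exp (-(x * real n))) \<le> \<bar>2 * diffs ha n\<bar> * exp (-(x * real n)) + \<bar>diffs (diffs ha) n\<bar> * exp (-(x * real n)) + \<bar>2 * gq n\<bar> * exp (-(x * real n))"
        by (simp add: algebra_simps)
    qed
  qed
qed

lemma POS:
  assumes t: "0 \<le> t" "t < 1"
  shows "2 * Fd t - (1 - 2 * t) * Fdd t > 0"
proof -
  have ta: "\<bar>t\<bar> < 1" using t by simp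
  have s3: "(\<lambda>n. diffs ha n * t^n) sums (Fd t)" using sx_powser[OF sx_dha ta] by (simp add: sums_iff Fd_def)
  have s6: "(\<lambda>n. diffs (diffs ha) n * t^n) sums (Fdd t)" using sx_powser[OF sx_ddha ta] by (simp add: sums_iff Fdd_def)
  have s1: "(\<lambda>n. gq n * t^n) sums (t * Fdd t)" using I1[OF ta] sx_powser[OF sx_gq ta] by (simp add: sums_iff)
  have "(\<lambda>n. 2 * (diffs ha n * t^n) - diffs (diffs ha) n * t^n + 2 * (gq n * t^n)) sums (2 * Fd t - Fdd t + 2 * (t * Fdd t))"
    by (intro sums_add sums_diff sums_mult s1 s3 s6)
  moreover have "(\<lambda>n. 2 * (diffs ha n * t^n) - diffs (diffs ha) n * t^n + 2 * (gq n * t^n)) = (\<lambda>n. pc n * t^n)"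
    by (simp add: pc_def algebra_simps fun_eq_iff)
  ultimately have s: "(\<lambda>n. pc n * t^n) sums (2 * Fd t - Fdd t + 2 * (t * Fdd t))" by simp
  have "0 < (\<Sum>n. pc n * t^n)"
  proof (rule suminf_pos2[OF sums_summable[OF s], of 0])
    show "0 \<le> pc n * t^n" for n using t less_imp_le[OF pc_pos[of n]] by simp
    show "0 < pc 0 * t^0" using pc_pos[of 0] by simp
  qed
  also have "(\<Sum>n. pc n * t^n) = 2 * Fd t - Fdd t + 2 * (t * Fdd t)" using s by (simp add: sums_iff)
  finally show ?thesis by (simp add: algebra_simps)
qed

lemma F_ge1: "0 \<le> t \<Longrightarrow> t < 1 \<Longrightarrow> F t \<ge> 1"
proof -
  assume t: "0 \<le> t" "t < 1"
  have "sum (\<lambda>n. ha n * t^n) {0} \<le> (\<Sum>n. ha n * t^n)"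
  proof (rule sum_le_suminf[OF sx_powser[OF sx_ha]])
    show "\<bar>t\<bar> < 1" using t by simp
    show "0 \<le> ha n * t^n" if "n \<in> - {0}" for n using t less_imp_le[OF ha_pos[of n]] by simp
  qed simp
  thus ?thesis by (simp add: F_def ha_0)
qed

lemma F_0: "F 0 = 1" by (simp add: F_def ha_0)
lemma Fd_0: "Fd 0 = 1/4" unfolding Fd_def powser_zero by (simp add: diffs_def ha_def power2_eq_square)


lemma ODE':
  assumes t: "0 < t" "t < 1"
  shows "Fdd t = (F t / 4 - (1 - 2*t) * Fd t) / (t * (1 - t))"
proof -
  have "t * Fdd t - t^2 * Fdd t + Fd t - 2 * t * Fd t - F t / 4 = 0" using ODE[of t] t by simp
  hence "t * (1 - t) * Fdd t = F t / 4 - (1 - 2*t) * Fd t" by (simp add: power2_eq_square algebra_simps)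
  thus ?thesis using t by (simp add: field_simps)
qed

lemma F_pos: "0 \<le> t \<Longrightarrow> t < 1 \<Longrightarrow> F t > 0" using F_ge1 by fastforce

definition hA where "hA t = ln t / 4 + ln (1 - t) / 4 + ln (F t)"
definition hAd where "hAd t = 1/(4*t) - 1/(4*(1-t)) + Fd t / F t"
definition hAdd where "hAdd t = -1/(4*t^2) - 1/(4*(1-t)^2) + (Fdd t * F t - Fd t ^ 2) / F t ^ 2"

lemma abs_lt1: "0 < t \<Longrightarrow> t < 1 \<Longrightarrow> \<bar>t\<bar> < (1::real)" by simp

lemma hA_deriv: "0 < t \<Longrightarrow> t < 1 \<Longrightarrow> (hA has_real_derivative hAd t) (at t)"
proof -
  assume t: "0 < t" "t < 1"
  have Fp: "F t > 0" using F_pos t by simp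
  have "(hA has_real_derivative (inverse t / 4 + (- inverse (1 - t)) / 4 + Fd t / F t)) (at t)"
    unfolding hA_def[abs_def] using t Fp
    by (auto intro!: derivative_eq_intros F_deriv simp: field_simps)
  thus ?thesis by (simp add: hAd_def field_simps)
qed

lemma d_inv1: "t \<noteq> 0 \<Longrightarrow> ((\<lambda>t. 1/(4*t)) has_real_derivative -1/(4*t^2)) (at t)"
  by (auto intro!: derivative_eq_intros simp: power2_eq_square field_simps)

lemma d_inv2: "t \<noteq> 1 \<Longrightarrow> ((\<lambda>t. - (1/(4*(1-t)))) has_real_derivative -1/(4*(1-t)^2)) (at t)"
proof -
  assume t: "t \<noteq> 1"
  have "((\<lambda>t. - (1/(4*(1-t)))) has_real_derivative - (- (4 * (-1)) / (4*(1-t) * (4*(1-t))))) (at t)"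
    using t by (auto intro!: derivative_eq_intros)
  moreover have "- (- (4 * (-1)) / (4*(1-t) * (4*(1-t)))) = -1/(4*(1-t)^2)"
  proof -
    define d where "d = (1-t)^2"
    have d: "d \<noteq> 0" using t by (simp add: d_def)
    have "4*(1-t) * (4*(1-t)) = 16 * d" by (simp add: d_def power2_eq_square algebra_simps)
    hence "- (- (4 * (-1)) / (4*(1-t) * (4*(1-t)))) = -4 / (16 * d)" by simp
    also have "\<dots> = -1/(4*d)" using d by (simp add: field_simps)
    finally show ?thesis by (simp add: d_def)
  qed
  ultimately show ?thesis by simp
qed

lemma hAd_deriv: "0 < t \<Longrightarrow> t < 1 \<Longrightarrow> (hAd has_real_derivative hAdd t) (at t)"
proof -
  assume t: "0 < t" "t < 1"
  have Fp: "F t > 0" using F_pos t by simp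
  have q: "((\<lambda>t. Fd t / F t) has_real_derivative (Fdd t * F t - Fd t * Fd t) / (F t * F t)) (at t)"
    using t Fp by (auto intro!: derivative_eq_intros F_deriv Fd_deriv simp: field_simps)
  have "((\<lambda>t. 1/(4*t) + - (1/(4*(1-t))) + Fd t / F t) has_real_derivative
          (-1/(4*t^2) + -1/(4*(1-t)^2) + (Fdd t * F t - Fd t * Fd t) / (F t * F t))) (at t)"
    using t by (intro DERIV_add d_inv1 d_inv2 q) auto
  moreover have "(\<lambda>t. 1/(4*t) + - (1/(4*(1-t))) + Fd t / F t) = hAd" by (auto simp: hAd_def fun_eq_iff)
  ultimately show ?thesis by (simp add: hAdd_def power2_eq_square)
qed

lemma hAdd_neg:
  assumes t: "0 < t" "t < 1"
  shows "hAdd t < 0"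
proof -
  define p where "p = t * (1 - t)"
  have p: "p > 0" using t by (simp add: p_def)
  have t1: "t \<noteq> 1" "1 - t \<noteq> 0" "t \<noteq> 0" using t by auto
  have Fp: "F t > 0" using F_pos t by simp
  have ta: "\<bar>t\<bar> < 1" using t by simp
  have ode: "p * Fdd t = F t / 4 - (1 - 2*t) * Fd t"
    using ODE[OF ta] by (simp add: p_def power2_eq_square algebra_simps)
  have pp: "p^2 = t^2 * (1-t)^2" by (simp add: p_def power_mult_distrib)
  have a1: "4*p^2*F t^2*(1/(4*t^2)) = (1-t)^2 * F t^2" unfolding pp using t1 by (simp add: field_simps)
  have a2: "4*p^2*F t^2*(1/(4*(1-t)^2)) = t^2 * F t^2"
  proof -
    define d where "d = (1-t)^2"
    have d: "d \<noteq> 0" using t1 by (simp add: d_def)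
    have "4*(t^2*d)*F t^2*(1/(4*d)) = t^2 * F t^2" using d by (simp add: field_simps)
    thus ?thesis unfolding pp d_def .
  qed
  have a3: "4*p^2*F t^2*((Fdd t * F t - Fd t ^ 2) / F t ^ 2) = 4*p*F t*(p * Fdd t) - 4*p^2*Fd t^2"
    using Fp by (simp add: field_simps power2_eq_square)
  have "4*p^2*F t^2*hAdd t = 4*p^2*F t^2*(-(1/(4*t^2))) + 4*p^2*F t^2*(-(1/(4*(1-t)^2))) + 4*p^2*F t^2*((Fdd t * F t - Fd t ^ 2) / F t ^ 2)"
    unfolding hAdd_def by (simp add: algebra_simps)
  also have "\<dots> = - ((1-t)^2 * F t^2) - t^2 * F t^2 + (4*p*F t*(p * Fdd t) - 4*p^2*Fd t^2)"
    using a1 a2 a3 by simp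
  also have "\<dots> = -((2*p*Fd t + (1 - 2*t) * F t)^2 + p * F t ^ 2)"
    unfolding ode by (simp add: p_def power2_eq_square algebra_simps)
  finally have key: "4*p^2*F t^2*hAdd t = -((2*p*Fd t + (1 - 2*t) * F t)^2 + p * F t ^ 2)" .
  have "-((2*p*Fd t + (1 - 2*t) * F t)^2 + p * F t ^ 2) < 0"
  proof -
    have "p * F t ^ 2 > 0" using p Fp by simp
    thus ?thesis by (smt (verit) zero_le_power2)
  qed
  hence "4 * p^2 * F t ^ 2 * hAdd t < 0" using key by simp
  moreover have "4 * p^2 * F t ^ 2 > 0" using p Fp by simp
  ultimately show ?thesis by (simp add: mult_less_0_iff)
qed

lemma hAd_decr: "0 < s \<Longrightarrow> s < u \<Longrightarrow> u < 1 \<Longrightarrow> hAd u < hAd s"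
proof -
  assume su: "0 < s" "s < u" "u < 1"
  show "hAd u < hAd s"
  proof (rule DERIV_neg_imp_decreasing[OF su(2)])
    fix x assume "s \<le> x" "x \<le> u"
    hence x: "0 < x" "x < 1" using su by auto
    thus "\<exists>y. (hAd has_real_derivative y) (at x) \<and> y < 0"
      using hAd_deriv[OF x] hAdd_neg[OF x] by blast
  qed
qed

definition PhiA where "PhiA t = hA t + hA (1 - t)"

lemma PhiA_deriv: "0 < t \<Longrightarrow> t < 1 \<Longrightarrow> (PhiA has_real_derivative (hAd t - hAd (1 - t))) (at t)"
proof -
  assume t: "0 < t" "t < 1"
  have d2: "(hA has_real_derivative hAd (1 - t)) (at (1 - t))" using hA_deriv[of "1 - t"] t by simp
  have i: "((\<lambda>t. 1 - t) has_real_derivative -1) (at t)" by (auto intro!: derivative_eq_intros)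
  have "((\<lambda>t. hA (1 - t)) has_real_derivative hAd (1 - t) * (- 1)) (at t)"
    using DERIV_chain'[of "\<lambda>t. 1 - t" "-1" t UNIV hA "hAd (1 - t)"] i d2 by simp
  thus ?thesis unfolding PhiA_def[abs_def] using hA_deriv[OF t]
    by (auto intro!: derivative_eq_intros)
qed

lemma PhiA_lt_half:
  assumes t: "0 < t" "t < 1/2"
  shows "PhiA t < PhiA (1/2)"
proof (rule DERIV_pos_imp_increasing_open[OF t(2)])
  fix s assume s: "t < s" "s < 1/2"
  hence s': "0 < s" "s < 1" using t by auto
  have "hAd (1 - s) < hAd s" using hAd_decr[of s "1 - s"] s t by auto
  thus "\<exists>y. (PhiA has_real_derivative y) (at s) \<and> y > 0"
    using PhiA_deriv[OF s'] by (intro exI[of _ "hAd s - hAd (1 - s)"]) auto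
next
  show "continuous_on {t..1/2} PhiA"
  proof (intro continuous_at_imp_continuous_on ballI)
    fix s assume "s \<in> {t..1/2}"
    hence s': "0 < s" "s < 1" using t by auto
    show "isCont PhiA s" using PhiA_deriv[OF s'] DERIV_isCont by blast
  qed
qed

lemma PhiA_sym: "PhiA (1 - t) = PhiA t" by (simp add: PhiA_def add.commute)

lemma PhiA_max:
  assumes t: "0 < t" "t < 1" "t \<noteq> 1/2"
  shows "PhiA t < PhiA (1/2)"
proof (cases "t < 1/2")
  case True then show ?thesis using PhiA_lt_half t by simp
next
  case False
  hence "0 < 1 - t" "1 - t < 1/2" using t by auto
  thus ?thesis using PhiA_lt_half[of "1 - t"] PhiA_sym[of t] by simp
qed

definition qB where "qB t = F t ^ 2 / 4 - (1 - 2*t) * F t * Fd t - t * (1 - t) * Fd t ^ 2"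

lemma qB_deriv:
  assumes t: "0 \<le> t" "t < 1"
  shows "(qB has_real_derivative F t * (2 * Fd t - (1 - 2*t) * Fdd t)) (at t)"
proof -
  have ta: "\<bar>t\<bar> < 1" using t by simp
  have ode: "t * (1 - t) * Fdd t = F t / 4 - (1 - 2*t) * Fd t"
    using ODE[OF ta] by (simp add: power2_eq_square algebra_simps)
  have "(qB has_real_derivative (2 * F t * Fd t / 4 - ((-2) * F t * Fd t + (1 - 2*t) * (Fd t * Fd t + F t * Fdd t))
          - ((1 - 2*t) * Fd t ^ 2 + t * (1 - t) * (2 * Fd t * Fdd t)))) (at t)"
    unfolding qB_def[abs_def] using ta
    by (auto intro!: derivative_eq_intros F_deriv Fd_deriv simp: power2_eq_square algebra_simps)
  moreover have "2 * F t * Fd t / 4 - ((-2) * F t * Fd t + (1 - 2*t) * (Fd t * Fd t + F t * Fdd t))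
          - ((1 - 2*t) * Fd t ^ 2 + t * (1 - t) * (2 * Fd t * Fdd t)) = F t * (2 * Fd t - (1 - 2*t) * Fdd t)"
  proof -
    have "t * (1 - t) * (2 * Fd t * Fdd t) = 2 * Fd t * (t * (1 - t) * Fdd t)" by (simp add: algebra_simps)
    also have "\<dots> = 2 * Fd t * (F t / 4 - (1 - 2*t) * Fd t)" by (simp add: ode)
    finally have e: "t * (1 - t) * (2 * Fd t * Fdd t) = 2 * Fd t * (F t / 4 - (1 - 2*t) * Fd t)" .
    show ?thesis unfolding e by (simp add: power2_eq_square algebra_simps)
  qed
  ultimately show ?thesis by simp
qed

lemma qB_pos:
  assumes t: "0 < t" "t < 1"
  shows "qB t > 0"
proof -
  have "qB 0 < qB t"
  proof (rule DERIV_pos_imp_increasing[OF t(1)])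
    fix x assume "0 \<le> x" "x \<le> t"
    hence x: "0 \<le> x" "x < 1" using t by auto
    have "F x * (2 * Fd x - (1 - 2*x) * Fdd x) > 0" using F_pos[OF x] POS[OF x] by simp
    thus "\<exists>y. (qB has_real_derivative y) (at x) \<and> y > 0" using qB_deriv[OF x] by blast
  qed
  moreover have "qB 0 = 0" by (simp add: qB_def F_0 Fd_0)
  ultimately show ?thesis by simp
qed

definition rB where "rB t = Fd t / F t"

lemma rB_deriv:
  assumes t: "0 < t" "t < 1"
  shows "(rB has_real_derivative (Fdd t * F t - Fd t * Fd t) / (F t * F t)) (at t)"
proof -
  have Fp: "F t > 0" using F_pos t by simp
  show ?thesis unfolding rB_def[abs_def] using t Fp
    by (auto intro!: derivative_eq_intros F_deriv Fd_deriv simp: field_simps)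
qed

lemma rB_deriv_pos:
  assumes t: "0 < t" "t < 1"
  shows "(Fdd t * F t - Fd t * Fd t) / (F t * F t) > 0"
proof -
  have Fp: "F t > 0" using F_pos t by simp
  have ta: "\<bar>t\<bar> < 1" using t by simp
  have ode: "t * (1 - t) * Fdd t = F t / 4 - (1 - 2*t) * Fd t"
    using ODE[OF ta] by (simp add: power2_eq_square algebra_simps)
  have "t * (1 - t) * (Fdd t * F t - Fd t * Fd t) = F t * (t * (1 - t) * Fdd t) - t * (1 - t) * Fd t * Fd t"
    by (simp add: algebra_simps)
  also have "\<dots> = qB t" unfolding ode qB_def by (simp add: power2_eq_square algebra_simps)
  finally have "t * (1 - t) * (Fdd t * F t - Fd t * Fd t) > 0" using qB_pos[OF t] by simp
  moreover have "t * (1 - t) > 0" using t by simp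
  ultimately have "Fdd t * F t - Fd t * Fd t > 0" by (simp add: zero_less_mult_iff)
  thus ?thesis using Fp by simp
qed

lemma rB_incr: "0 < s \<Longrightarrow> s < u \<Longrightarrow> u < 1 \<Longrightarrow> rB s < rB u"
proof -
  assume su: "0 < s" "s < u" "u < 1"
  show "rB s < rB u"
  proof (rule DERIV_pos_imp_increasing[OF su(2)])
    fix x assume "s \<le> x" "x \<le> u"
    hence x: "0 < x" "x < 1" using su by auto
    thus "\<exists>y. (rB has_real_derivative y) (at x) \<and> y > 0"
      using rB_deriv[OF x] rB_deriv_pos[OF x] by blast
  qed
qed

definition PhiB where "PhiB t = ln (F t) + ln (F (1 - t))"

lemma PhiB_deriv: "0 < t \<Longrightarrow> t < 1 \<Longrightarrow> (PhiB has_real_derivative (rB t - rB (1 - t))) (at t)"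
proof -
  assume t: "0 < t" "t < 1"
  have Fp: "F t > 0" "F (1 - t) > 0" using F_pos t by auto
  have d2: "(F has_real_derivative Fd (1 - t)) (at (1 - t))" using F_deriv[of "1 - t"] t by simp
  have i: "((\<lambda>t. 1 - t) has_real_derivative -1) (at t)" by (auto intro!: derivative_eq_intros)
  have c: "((\<lambda>t. F (1 - t)) has_real_derivative Fd (1 - t) * (- 1)) (at t)"
    using DERIV_chain'[of "\<lambda>t. 1 - t" "-1" t UNIV F "Fd (1 - t)"] i d2 by simp
  have l1: "((\<lambda>x. ln (F x)) has_real_derivative (1 / F t) * Fd t) (at t)"
    using DERIV_chain'[OF F_deriv[of t] DERIV_ln_divide[OF Fp(1)]] t by simp
  have l2: "((\<lambda>x. ln (F (1 - x))) has_real_derivative (1 / F (1 - t)) * (Fd (1 - t) * (- 1))) (at t)"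
    using DERIV_chain'[OF c DERIV_ln_divide[OF Fp(2)]] by simp
  have "(PhiB has_real_derivative (1 / F t) * Fd t + (1 / F (1 - t)) * (Fd (1 - t) * (- 1))) (at t)"
    unfolding PhiB_def[abs_def] by (rule DERIV_add[OF l1 l2])
  thus ?thesis by (simp add: rB_def)
qed

lemma PhiB_gt_half:
  assumes t: "0 < t" "t < 1/2"
  shows "PhiB t > PhiB (1/2)"
proof (rule DERIV_neg_imp_decreasing_open[OF t(2)])
  fix s assume s: "t < s" "s < 1/2"
  hence s': "0 < s" "s < 1" using t by auto
  have "rB s < rB (1 - s)" using rB_incr[of s "1 - s"] s t by auto
  thus "\<exists>y. (PhiB has_real_derivative y) (at s) \<and> y < 0"
    using PhiB_deriv[OF s'] by (intro exI[of _ "rB s - rB (1 - s)"]) auto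
next
  show "continuous_on {t..1/2} PhiB"
  proof (intro continuous_at_imp_continuous_on ballI)
    fix s assume "s \<in> {t..1/2}"
    hence s': "0 < s" "s < 1" using t by auto
    show "isCont PhiB s" using PhiB_deriv[OF s'] DERIV_isCont by blast
  qed
qed

lemma PhiB_sym: "PhiB (1 - t) = PhiB t" by (simp add: PhiB_def add.commute)

lemma PhiB_min:
  assumes t: "0 < t" "t < 1" "t \<noteq> 1/2"
  shows "PhiB t > PhiB (1/2)"
proof (cases "t < 1/2")
  case True then show ?thesis using PhiB_gt_half t by simp
next
  case False
  hence "0 < 1 - t" "1 - t < 1/2" using t by auto
  thus ?thesis using PhiB_gt_half[of "1 - t"] PhiB_sym[of t] by simp
qed


lemma hyp_F': "hyp2F1 (1/2) (1/2) 1 t = F t" by (simp add: hyp_F F_def)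

definition IA where "IA k' = (let k = sqrt (1 - k'^2) in k * k' * hyp2F1 (1/2) (1/2) 1 (k^2) * hyp2F1 (1/2) (1/2) 1 (k'^2))"
definition IB where "IB k' = (let k = sqrt (1 - k'^2) in hyp2F1 (1/2) (1/2) 1 (k^2) * hyp2F1 (1/2) (1/2) 1 (k'^2))"

lemma A_IA: "A_fun k' = sqrt (IA k')" by (simp add: A_fun_def IA_def Let_def)
lemma B_IB: "B_fun k' = sqrt (IB k')" by (simp add: B_fun_def IB_def Let_def)

lemma ksq: "0 < k' \<Longrightarrow> k' < 1 \<Longrightarrow> k'^2 < (1::real)"
  using power_strict_mono[of k' 1 2] by simp

lemma IA_form:
  assumes k: "0 < k'" "k' < 1"
  shows "IA k' = sqrt (1 - k'^2) * sqrt (k'^2) * F (1 - k'^2) * F (k'^2)"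
proof -
  have "k'^2 < 1" using ksq k by simp
  hence "sqrt (1 - k'^2) ^ 2 = 1 - k'^2" by simp
  moreover have "sqrt (k'^2) = k'" using k by simp
  ultimately show ?thesis by (simp add: IA_def Let_def hyp_F')
qed

lemma IB_form:
  assumes k: "0 < k'" "k' < 1"
  shows "IB k' = F (1 - k'^2) * F (k'^2)"
proof -
  have "k'^2 < 1" using ksq k by simp
  hence "sqrt (1 - k'^2) ^ 2 = 1 - k'^2" by simp
  thus ?thesis by (simp add: IB_def Let_def hyp_F')
qed

lemma ln_IA:
  assumes k: "0 < k'" "k' < 1"
  shows "IA k' > 0" "ln (IA k') = PhiA (k'^2)"
proof -
  define t where "t = k'^2"
  have t: "0 < t" "t < 1" using k ksq by (auto simp: t_def)
  have Fp: "F t > 0" "F (1 - t) > 0" using F_pos t by auto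
  have e: "IA k' = sqrt (1 - t) * sqrt t * F (1 - t) * F t" using IA_form[OF k] by (simp add: t_def)
  show "IA k' > 0" unfolding e using t Fp by simp
  have "ln (IA k') = ln (sqrt (1 - t)) + ln (sqrt t) + ln (F (1 - t)) + ln (F t)"
    unfolding e using t Fp by (simp add: ln_mult)
  also have "\<dots> = PhiA t"
    using t by (simp add: PhiA_def hA_def ln_sqrt)
  finally show "ln (IA k') = PhiA (k'^2)" by (simp add: t_def)
qed

lemma ln_IB:
  assumes k: "0 < k'" "k' < 1"
  shows "IB k' > 0" "ln (IB k') = PhiB (k'^2)"
proof -
  define t where "t = k'^2"
  have t: "0 < t" "t < 1" using k ksq by (auto simp: t_def)
  have Fp: "F t > 0" "F (1 - t) > 0" using F_pos t by auto
  have e: "IB k' = F (1 - t) * F t" using IB_form[OF k] by (simp add: t_def)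
  show "IB k' > 0" unfolding e using t Fp by simp
  have "ln (IB k') = ln (F (1 - t)) + ln (F t)" unfolding e using Fp by (simp add: ln_mult)
  also have "\<dots> = PhiB t" by (simp add: PhiB_def)
  finally show "ln (IB k') = PhiB (k'^2)" by (simp add: t_def)
qed

lemma half_sqrt: "0 < 1 / sqrt 2" "1 / sqrt 2 < (1::real)" "(1 / sqrt 2)^2 = (1/2::real)"
  by (auto simp: power_divide)

lemma sq_half_iff:
  assumes "0 < k'" shows "k'^2 = 1/2 \<longleftrightarrow> k' = 1 / sqrt 2"
proof
  assume h: "k'^2 = 1/2"
  have "k' = sqrt (k'^2)" using assms by simp
  also have "\<dots> = sqrt (1/2)" by (simp only: h)
  also have "\<dots> = 1 / sqrt 2" by (simp add: real_sqrt_divide)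
  finally show "k' = 1 / sqrt 2" .
qed (simp add: power_divide)

lemma partAB:
  assumes k: "0 < k'" "k' < 1"
  shows "A_fun k' \<le> A_fun (1 / sqrt 2) \<and> B_fun k' \<ge> B_fun (1 / sqrt 2) \<and>
         (A_fun k' = A_fun (1 / sqrt 2) \<longleftrightarrow> k' = 1 / sqrt 2) \<and>
         (B_fun k' = B_fun (1 / sqrt 2) \<longleftrightarrow> k' = 1 / sqrt 2)"
proof -
  define t where "t = k'^2"
  have t: "0 < t" "t < 1" using k ksq by (auto simp: t_def)
  note h = half_sqrt
  have IAp: "IA k' > 0" "IA (1 / sqrt 2) > 0" using ln_IA(1)[OF k] ln_IA(1)[OF h(1,2)] by auto
  have IBp: "IB k' > 0" "IB (1 / sqrt 2) > 0" using ln_IB(1)[OF k] ln_IB(1)[OF h(1,2)] by auto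
  have lA: "ln (IA k') = PhiA t" "ln (IA (1 / sqrt 2)) = PhiA (1/2)"
    using ln_IA(2)[OF k] ln_IA(2)[OF h(1,2)] h(3) by (auto simp: t_def)
  have lB: "ln (IB k') = PhiB t" "ln (IB (1 / sqrt 2)) = PhiB (1/2)"
    using ln_IB(2)[OF k] ln_IB(2)[OF h(1,2)] h(3) by (auto simp: t_def)
  have tiff: "t = 1/2 \<longleftrightarrow> k' = 1 / sqrt 2" using sq_half_iff[OF k(1)] by (simp add: t_def)
  show ?thesis
  proof (cases "t = 1/2")
    case True
    hence "k' = 1 / sqrt 2" using tiff by simp
    thus ?thesis by simp
  next
    case False
    have "PhiA t < PhiA (1/2)" using PhiA_max[OF t False] .
    hence a: "IA k' < IA (1 / sqrt 2)" using lA IAp by (metis ln_less_cancel_iff)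
    have "PhiB t > PhiB (1/2)" using PhiB_min[OF t False] .
    hence b: "IB k' > IB (1 / sqrt 2)" using lB IBp by (metis ln_less_cancel_iff)
    have "A_fun k' < A_fun (1 / sqrt 2)" unfolding A_IA using a by simp
    moreover have "B_fun k' > B_fun (1 / sqrt 2)" unfolding B_IB using b by simp
    moreover have "k' \<noteq> 1 / sqrt 2" using tiff False by simp
    ultimately show ?thesis by auto
  qed
qed

lemma partTheta:
  assumes a: "\<alpha> > 0"
  shows "theta4 (exp (-pi * \<alpha>^2)) * theta4 (exp (-pi / \<alpha>^2)) \<le> (theta4 (exp (-pi)))^2 \<and>
            theta3 (exp (-pi * \<alpha>^2)) * theta3 (exp (-pi / \<alpha>^2)) \<ge> (theta3 (exp (-pi)))^2 \<and>
            (theta4 (exp (-pi * \<alpha>^2)) * theta4 (exp (-pi / \<alpha>^2)) = (theta4 (exp (-pi)))^2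
               \<longleftrightarrow> \<alpha> = 1) \<and>
            (theta3 (exp (-pi * \<alpha>^2)) * theta3 (exp (-pi / \<alpha>^2)) = (theta3 (exp (-pi)))^2
               \<longleftrightarrow> \<alpha> = 1)"
proof -
  define x where "x = \<alpha>^2"
  have x: "x > 0" using a by (simp add: x_def)
  have e1: "exp (-pi * \<alpha>^2) = exp (-(pi * x))" by (simp add: x_def)
  have e2: "exp (-pi / \<alpha>^2) = exp (-(pi * (1/x)))" by (simp add: x_def)
  have e3: "exp (-pi) = exp (-(pi * 1))" by simp
  have th4: "theta4 (exp (-pi * \<alpha>^2)) * theta4 (exp (-pi / \<alpha>^2)) = Q4 x"
    unfolding e1 e2 using theta4_T4[OF x] theta4_T4[of "1/x"] x by (simp add: Q4_def)
  have th4': "(theta4 (exp (-pi)))^2 = Q4 1"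
    unfolding e3 using theta4_T4[of 1] by (simp add: Q4_def power2_eq_square)
  have th3: "theta3 (exp (-pi * \<alpha>^2)) * theta3 (exp (-pi / \<alpha>^2)) = R3 x"
    unfolding e1 e2 using theta3_T3[OF x] theta3_T3[of "1/x"] x R3_prod[OF x] by simp
  have th3': "(theta3 (exp (-pi)))^2 = R3 1"
    unfolding e3 using theta3_T3[of 1] by (simp add: R3_def)
  have aiff: "x = 1 \<longleftrightarrow> \<alpha> = 1" using a power2_eq_1_iff[of \<alpha>] by (auto simp: x_def)
  show ?thesis unfolding th4 th4' th3 th3' using Q4_max[OF x] R3_min[OF x] aiff by simp
qed

theorem mainTheorem5:
  shows "(\<forall>k'::real. 0 < k' \<and> k' < 1 \<longrightarrow>
            A_fun k' \<le> A_fun (1 / sqrt 2) \<and>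
            B_fun k' \<ge> B_fun (1 / sqrt 2) \<and>
            (A_fun k' = A_fun (1 / sqrt 2) \<longleftrightarrow> k' = 1 / sqrt 2) \<and>
            (B_fun k' = B_fun (1 / sqrt 2) \<longleftrightarrow> k' = 1 / sqrt 2))
       \<and> (\<forall>\<alpha>::real. \<alpha> > 0 \<longrightarrow>
            theta4 (exp (-pi * \<alpha>^2)) * theta4 (exp (-pi / \<alpha>^2)) \<le> (theta4 (exp (-pi)))^2 \<and>
            theta3 (exp (-pi * \<alpha>^2)) * theta3 (exp (-pi / \<alpha>^2)) \<ge> (theta3 (exp (-pi)))^2 \<and>
            (theta4 (exp (-pi * \<alpha>^2)) * theta4 (exp (-pi / \<alpha>^2)) = (theta4 (exp (-pi)))^2
               \<longleftrightarrow> \<alpha> = 1) \<and>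
            (theta3 (exp (-pi * \<alpha>^2)) * theta3 (exp (-pi / \<alpha>^2)) = (theta3 (exp (-pi)))^2
               \<longleftrightarrow> \<alpha> = 1))"
  using partAB partTheta by blast


end
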